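(* Let $n\ge1$, $N\ge3$, $m=n+N$, let $u>0$ solve $\partial_tu=\Delta_xu$ on $\mathbb{R}^n\times(0,\infty)$ with $u=t^{-n/2}e^{-f}$, fix $0<\tau_1<\tau_2$ and assume $f$ and all of its partial derivatives in $x,t$ are bounded on $\mathbb{R}^n\times[\tau_1,\tau_2]$. Let $v,b,B$ be as in the context and, at $(x,y)$, set $\tau=\frac{|y|^2}{2N}\in[\tau_1,\tau_2]$. Then, in block form with respect to $\mathbb{R}^m=\mathbb{R}^n\times\mathbb{R}^N$, \[ \mathrm{Hess}(b^2)(x,y)=\frac{2b^2}{N}\Big(\mathrm{Hess}_xf(x,\tau)\oplus\frac{1}{2\tau}I_N+O(N^{-1/2})\,Q_1+O(N^{-1})\,Q_2\Big), \] where $\mathrm{Hess}_xf(x,\tau)$ occupies the $n\times n$ block and $\frac1{2\tau}I_N$ the $N\times N$ block, $Q_1$ is a matrix supported in the off-diagonal blocks and $Q_2$ a matrix supported in the two diagonal blocks, with entries bounded independently of $N$. Moreover \[ |B|^2=\frac{4b^4}{N^2}\Big(\Big|\mathrm{Hess}_xf(x,\tau)-\frac{1}{2\tau}I_n\Big|^2+O(N^{-1})\Big). \] Here the $O(\cdot)$ constants do not depend on $N,x,y$.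
   Context: $\mathbb{R}^m=\mathbb{R}^n\times\mathbb{R}^N$, points $(x,y)$, $r=|y|$; $\mathrm{Hess}$ and $\Delta$ are Euclidean on $\mathbb{R}^m$, $\mathrm{Hess}_x$ is the Hessian in $x$. $v(x,y)=r^{2-m}\exp(-f(x,\tfrac{r^2}{2N}))$, $b=v^{1/(2-m)}$, $B=\mathrm{Hess}(b^2)-\frac{\Delta b^2}{m}I_m$, $|\cdot|^2$ the squared Hilbert–Schmidt norm. *)

theory Defs
  imports "HOL-Analysis.Analysis"
begin

text \<open>Points of R^k are represented as functions nat => real vanishing at indices >= k.
  For R^m = R^n x R^N, coordinates 0..n-1 are x, coordinates n..n+N-1 are y.\<close>

definition Rvec :: "nat \<Rightarrow> (nat \<Rightarrow> real) set" where
  "Rvec k = {z. \<forall>i\<ge>k. z i = 0}"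

definition pdx :: "nat \<Rightarrow> ((nat \<Rightarrow> real) \<Rightarrow> real \<Rightarrow> real) \<Rightarrow> (nat \<Rightarrow> real) \<Rightarrow> real \<Rightarrow> real" where
  "pdx i g x t = deriv (\<lambda>s. g (x(i := x i + s)) t) 0"

definition pdt :: "((nat \<Rightarrow> real) \<Rightarrow> real \<Rightarrow> real) \<Rightarrow> (nat \<Rightarrow> real) \<Rightarrow> real \<Rightarrow> real" where
  "pdt g x t = deriv (\<lambda>s. g x s) t"

datatype dir = DX nat | DT

fun dop :: "dir \<Rightarrow> ((nat \<Rightarrow> real) \<Rightarrow> real \<Rightarrow> real) \<Rightarrow> (nat \<Rightarrow> real) \<Rightarrow> real \<Rightarrow> real" where
  "dop (DX i) = pdx i"
| "dop DT = pdt"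

fun pd :: "dir list \<Rightarrow> ((nat \<Rightarrow> real) \<Rightarrow> real \<Rightarrow> real) \<Rightarrow> (nat \<Rightarrow> real) \<Rightarrow> real \<Rightarrow> real" where
  "pd [] g = g"
| "pd (d # ds) g = dop d (pd ds g)"

definition dir_ok :: "nat \<Rightarrow> dir \<Rightarrow> bool" where
  "dir_ok n d = (case d of DX i \<Rightarrow> i < n | DT \<Rightarrow> True)"

definition all_partials_exist :: "nat \<Rightarrow> ((nat \<Rightarrow> real) \<Rightarrow> real \<Rightarrow> real) \<Rightarrow> bool" where
  "all_partials_exist n g \<longleftrightarrow>
     (\<forall>ds d x t. list_all (dir_ok n) (d # ds) \<longrightarrow> x \<in> Rvec n \<longrightarrow> t > 0 \<longrightarrow>
        (case d of
           DX i \<Rightarrow> (\<lambda>s. pd ds g (x(i := x i + s)) t) differentiable (at 0)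
         | DT \<Rightarrow> (\<lambda>s. pd ds g x s) differentiable (at t)))"

definition rad :: "nat \<Rightarrow> nat \<Rightarrow> (nat \<Rightarrow> real) \<Rightarrow> real" where
  "rad n N z = sqrt (\<Sum>j<N. (z (n + j))^2)"

definition xpart :: "nat \<Rightarrow> (nat \<Rightarrow> real) \<Rightarrow> (nat \<Rightarrow> real)" where
  "xpart n z = (\<lambda>i. if i < n then z i else 0)"

definition vfun :: "nat \<Rightarrow> nat \<Rightarrow> ((nat \<Rightarrow> real) \<Rightarrow> real \<Rightarrow> real) \<Rightarrow> (nat \<Rightarrow> real) \<Rightarrow> real" where
  "vfun n N f z = rad n N z powr (2 - real (n + N))
      * exp (- f (xpart n z) ((rad n N z)^2 / (2 * real N)))"

definition bfun :: "nat \<Rightarrow> nat \<Rightarrow> ((nat \<Rightarrow> real) \<Rightarrow> real \<Rightarrow> real) \<Rightarrow> (nat \<Rightarrow> real) \<Rightarrow> real" where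
  "bfun n N f z = vfun n N f z powr (1 / (2 - real (n + N)))"

definition pdz :: "nat \<Rightarrow> ((nat \<Rightarrow> real) \<Rightarrow> real) \<Rightarrow> (nat \<Rightarrow> real) \<Rightarrow> real" where
  "pdz k g z = deriv (\<lambda>s. g (z(k := z k + s))) 0"

definition hessz :: "((nat \<Rightarrow> real) \<Rightarrow> real) \<Rightarrow> (nat \<Rightarrow> real) \<Rightarrow> nat \<Rightarrow> nat \<Rightarrow> real" where
  "hessz g z k l = pdz k (pdz l g) z"

definition lapz :: "nat \<Rightarrow> ((nat \<Rightarrow> real) \<Rightarrow> real) \<Rightarrow> (nat \<Rightarrow> real) \<Rightarrow> real" where
  "lapz m g z = (\<Sum>k<m. hessz g z k k)"

definition Bmat :: "nat \<Rightarrow> nat \<Rightarrow> ((nat \<Rightarrow> real) \<Rightarrow> real \<Rightarrow> real) \<Rightarrow> (nat \<Rightarrow> real) \<Rightarrow> nat \<Rightarrow> nat \<Rightarrow> real" where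
  "Bmat n N f z k l =
     hessz (\<lambda>w. (bfun n N f w)^2) z k l
     - (if k = l then lapz (n + N) (\<lambda>w. (bfun n N f w)^2) z / real (n + N) else 0)"

definition Bnorm2 :: "nat \<Rightarrow> nat \<Rightarrow> ((nat \<Rightarrow> real) \<Rightarrow> real \<Rightarrow> real) \<Rightarrow> (nat \<Rightarrow> real) \<Rightarrow> real" where
  "Bnorm2 n N f z = (\<Sum>k<n+N. \<Sum>l<n+N. (Bmat n N f z k l)^2)"

definition M0 :: "nat \<Rightarrow> ((nat \<Rightarrow> real) \<Rightarrow> real \<Rightarrow> real) \<Rightarrow> (nat \<Rightarrow> real) \<Rightarrow> real \<Rightarrow> nat \<Rightarrow> nat \<Rightarrow> real" where
  "M0 n f x \<tau> k l =
     (if k < n \<and> l < n then pdx k (pdx l f) x \<tau>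
      else if n \<le> k \<and> n \<le> l then (if k = l then 1 / (2 * \<tau>) else 0)
      else 0)"

end

theory Submission
  imports Defs
begin
definition rho :: "nat \<Rightarrow> nat \<Rightarrow> (nat \<Rightarrow> real) \<Rightarrow> real" where
  "rho n N z = (\<Sum>j<N. (z (n + j))^2)"

definition Gf :: "nat \<Rightarrow> nat \<Rightarrow> ((nat \<Rightarrow> real) \<Rightarrow> real \<Rightarrow> real) \<Rightarrow> (nat \<Rightarrow> real) \<Rightarrow> real" where
  "Gf n N f z = rho n N z * exp (2 / (real (n + N) - 2) * f (xpart n z) (rho n N z / (2 * real N)))"

lemma rho_nonneg: "rho n N z \<ge> 0"
  unfolding rho_def by (rule sum_nonneg) simp

lemma rad_sq: "(rad n N z)^2 = rho n N z"
  unfolding rad_def using rho_nonneg[of n N z] unfolding rho_def by simp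

lemma bsq:
  assumes "n + N \<ge> 3"
  shows "(bfun n N f z)^2 = Gf n N f z"
proof -
  define F where "F = f (xpart n z) (rho n N z / (2 * real N))"
  define r where "r = rad n N z"
  have r0: "r \<ge> 0" unfolding r_def rad_def by (simp add: sum_nonneg)
  have vf: "vfun n N f z = r powr (2 - real (n + N)) * exp (- F)"
    unfolding vfun_def F_def r_def rad_sq ..
  show ?thesis
  proof (cases "r = 0")
    case True
    then have "rho n N z = 0" using rad_sq[of n N z] r_def by simp
    then show ?thesis using True unfolding bfun_def vf Gf_def by simp
  next
    case False
    then have rp: "r > 0" using r0 by simp
    have e: "- (F * 2 / (2 - (real N + real n))) = F * 2 / (real N + real n - 2)"
      by (metis minus_diff_eq minus_divide_right)
    have m: "2 - real (n + N) \<noteq> 0" using assms by simp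
    have "bfun n N f z = (r powr (2 - real (n + N))) powr (1 / (2 - real (n + N))) * exp (- F) powr (1 / (2 - real (n + N)))"
      unfolding bfun_def vf using rp by (simp add: powr_mult)
    also have "\<dots> = r * exp (- F / (2 - real (n + N)))"
      using rp m by (simp add: powr_powr exp_powr_real)
    finally have "(bfun n N f z)^2 = r^2 * exp (- F / (2 - real (n + N)))^2" by (simp add: power_mult_distrib)
    also have "\<dots> = Gf n N f z"
      using e unfolding Gf_def F_def[symmetric] r_def rad_sq
      by (simp add: exp_double[symmetric] power2_eq_square exp_add[symmetric] field_simps)
    finally show ?thesis .
  qed
qed

definition phi :: "nat \<Rightarrow> nat \<Rightarrow> ((nat \<Rightarrow> real) \<Rightarrow> real \<Rightarrow> real) \<Rightarrow> dir list \<Rightarrow> (nat \<Rightarrow> real) \<Rightarrow> real" where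
  "phi n N f ds w = pd ds f (xpart n w) (rho n N w / (2 * real N))"

lemma rho_upd_x: "i < n \<Longrightarrow> rho n N (w(i := v)) = rho n N w"
  unfolding rho_def by (intro sum.cong) auto

lemma xpart_upd_x: "i < n \<Longrightarrow> xpart n (w(i := w i + s)) = (xpart n w)(i := xpart n w i + s)"
  unfolding xpart_def by auto

lemma xpart_upd_y: "n \<le> k \<Longrightarrow> xpart n (w(k := v)) = xpart n w"
  unfolding xpart_def by auto

lemma xpart_Rvec: "xpart n w \<in> Rvec n"
  unfolding xpart_def Rvec_def by auto

lemma rho_upd_y:
  assumes "j < N"
  shows "rho n N (w(n+j := w (n+j) + s)) = rho n N w + 2 * s * w (n+j) + s^2"
proof -
  have "rho n N (w(n+j := w (n+j) + s)) = (\<Sum>j'<N. (w (n+j'))^2 + (if j' = j then 2 * s * w (n+j) + s^2 else 0))"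
    unfolding rho_def by (intro sum.cong) (auto simp: power2_eq_square algebra_simps)
  also have "\<dots> = rho n N w + 2 * s * w (n+j) + s^2"
    using assms by (simp add: sum.distrib rho_def)
  finally show ?thesis .
qed

lemma DXd:
  assumes "all_partials_exist n f" "x \<in> Rvec n" "t > 0" "i < n" "list_all (dir_ok n) ds"
  shows "((\<lambda>s. pd ds f (x(i := x i + s)) t) has_real_derivative pd (DX i # ds) f x t) (at 0)"
proof -
  have "(\<lambda>s. pd ds f (x(i := x i + s)) t) differentiable (at 0)"
    using assms unfolding all_partials_exist_def
    by (erule_tac x=ds in allE, erule_tac x="DX i" in allE) (auto simp: dir_ok_def)
  then show ?thesis
    by (simp add: DERIV_deriv_iff_real_differentiable[symmetric] pdx_def)
qed

lemma DTd:
  assumes "all_partials_exist n f" "x \<in> Rvec n" "t > 0" "list_all (dir_ok n) ds"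
  shows "((\<lambda>s. pd ds f x s) has_real_derivative pd (DT # ds) f x t) (at t)"
proof -
  have "(\<lambda>s. pd ds f x s) differentiable (at t)"
    using assms unfolding all_partials_exist_def
    by (erule_tac x=ds in allE, erule_tac x="DT" in allE) (auto simp: dir_ok_def)
  then show ?thesis
    by (simp add: DERIV_deriv_iff_real_differentiable[symmetric] pdt_def)
qed

lemma LX:
  assumes "all_partials_exist n f" "i < n" "rho n N w > 0" "N > 0" "list_all (dir_ok n) ds"
  shows "((\<lambda>s. phi n N f ds (w(i := w i + s))) has_real_derivative phi n N f (DX i # ds) w) (at 0)"
proof -
  have "(\<lambda>s. phi n N f ds (w(i := w i + s))) = (\<lambda>s. pd ds f ((xpart n w)(i := xpart n w i + s)) (rho n N w / (2 * real N)))"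
    unfolding phi_def using assms by (simp add: rho_upd_x xpart_upd_x)
  moreover have "rho n N w / (2 * real N) > 0" using assms by simp
  ultimately show ?thesis
    using DXd[OF assms(1) xpart_Rvec _ assms(2) assms(5)] unfolding phi_def by simp
qed

lemma LY:
  assumes "all_partials_exist n f" "j < N" "rho n N w > 0" "list_all (dir_ok n) ds"
  shows "((\<lambda>s. phi n N f ds (w(n+j := w (n+j) + s))) has_real_derivative phi n N f (DT # ds) w * (w (n+j) / real N)) (at 0)"
proof -
  have N: "N > 0" using assms by simp
  have eq: "(\<lambda>s. phi n N f ds (w(n+j := w (n+j) + s))) = (\<lambda>s. pd ds f (xpart n w) ((\<lambda>s. (rho n N w + 2 * s * w (n+j) + s^2) / (2 * real N)) s))"
    unfolding phi_def using assms by (simp add: rho_upd_y xpart_upd_y)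
  have t: "rho n N w / (2 * real N) > 0" using assms N by simp
  have d1: "((\<lambda>s. (rho n N w + 2 * s * w (n+j) + s^2) / (2 * real N)) has_real_derivative w (n+j) / real N) (at 0)"
    using N by (auto intro!: derivative_eq_intros)
  have d2: "((\<lambda>s. pd ds f (xpart n w) s) has_real_derivative pd (DT # ds) f (xpart n w) (rho n N w / (2 * real N))) (at ((\<lambda>s. (rho n N w + 2 * s * w (n+j) + s^2) / (2 * real N)) 0))"
    using DTd[OF assms(1) xpart_Rvec t assms(4)] by simp
  show ?thesis unfolding eq using DERIV_chain2[OF d2 d1] unfolding phi_def by simp
qed

lemma RX: "i < n \<Longrightarrow> ((\<lambda>s. rho n N (w(i := w i + s))) has_real_derivative 0) (at 0)"
  by (simp add: rho_upd_x)

lemma RY: "j < N \<Longrightarrow> ((\<lambda>s. rho n N (w(n+j := w (n+j) + s))) has_real_derivative 2 * w (n+j)) (at 0)"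
  by (simp add: rho_upd_y) (auto intro!: derivative_eq_intros)

lemma CD: "((\<lambda>s. (w(k := w k + s)) l) has_real_derivative (if k = l then 1 else 0)) (at 0)"
  by (cases "k = l") (auto intro!: derivative_eq_intros)

lemma d3:
  assumes "(A has_real_derivative DA) (at 0)" "(B has_real_derivative DB) (at 0)" "(C has_real_derivative DC) (at 0)"
  shows "((\<lambda>s. A s * exp (a * B s) * C s) has_real_derivative
     (DA * exp (a * B 0) * C 0 + A 0 * exp (a * B 0) * a * DB * C 0 + A 0 * exp (a * B 0) * DC)) (at 0)"
  using assms by (auto intro!: derivative_eq_intros simp: algebra_simps)

lemma Gf_phi: "Gf n N f w = rho n N w * exp (2 / (real (n + N) - 2) * phi n N f [] w)"
  unfolding Gf_def phi_def by simp

lemma deriv_ev: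
  assumes "eventually (\<lambda>s. g s = h s) (nhds 0)" "(h has_real_derivative D) (at 0)"
  shows "deriv g 0 = D"
proof -
  have "(g has_real_derivative D) (at 0)"
    using DERIV_cong_ev[OF refl assms(1) refl] assms(2) by simp
  then show ?thesis by (rule DERIV_imp_deriv)
qed

lemma EV:
  assumes "rho n N z > 0" "k < n + N"
  shows "eventually (\<lambda>s. rho n N (z(k := z k + s)) > 0) (nhds 0)"
proof (cases "k < n")
  case True
  then show ?thesis using assms by (simp add: rho_upd_x)
next
  case False
  then obtain j where j: "k = n + j" "j < N" using assms
    by (metis add_diff_inverse_nat add_less_cancel_left)
  have "((\<lambda>s. rho n N z + 2 * s * z (n+j) + s^2) \<longlongrightarrow> rho n N z + 2 * 0 * z (n+j) + 0^2) (nhds 0)"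
    by (intro tendsto_intros filterlim_ident)
  then have "eventually (\<lambda>s. rho n N z + 2 * s * z (n+j) + s^2 > 0) (nhds 0)"
    using order_tendstoD(1)[of _ "rho n N z + 2 * 0 * z (n+j) + 0^2" _ 0] assms by simp
  then show ?thesis using j by (simp add: rho_upd_y)
qed

context
  fixes n N :: nat and f :: "(nat \<Rightarrow> real) \<Rightarrow> real \<Rightarrow> real" and a :: real
  assumes sm: "all_partials_exist n f" and Npos: "N > 0"
    and a_def: "a = 2 / (real (n + N) - 2)"
begin

lemma P1x:
  assumes "i < n" "rho n N w > 0"
  shows "pdz i (Gf n N f) w = rho n N w * exp (a * phi n N f [] w) * (a * phi n N f [DX i] w)"
proof -
  have "((\<lambda>s. rho n N (w(i := w i + s)) * exp (a * phi n N f [] (w(i := w i + s))) * 1) has_real_derivative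
     (0 * exp (a * phi n N f [] w) * 1 + rho n N w * exp (a * phi n N f [] w) * a * phi n N f [DX i] w * 1 + rho n N w * exp (a * phi n N f [] w) * 0)) (at 0)"
    using d3[OF RX[OF assms(1)] LX[OF sm assms(1) assms(2) Npos, of "[]"], where C="\<lambda>s. 1" and DC=0 and a=a] by simp
  then show ?thesis unfolding pdz_def Gf_phi a_def[symmetric]
    by (intro DERIV_imp_deriv) (simp add: mult.assoc)
qed

lemma P1y:
  assumes "j < N" "rho n N w > 0"
  shows "pdz (n+j) (Gf n N f) w = w (n+j) * exp (a * phi n N f [] w) * (2 + a * rho n N w * phi n N f [DT] w / real N)"
proof -
  have "((\<lambda>s. rho n N (w(n+j := w (n+j) + s)) * exp (a * phi n N f [] (w(n+j := w (n+j) + s))) * 1) has_real_derivative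
     (2 * w (n+j) * exp (a * phi n N f [] w) * 1 + rho n N w * exp (a * phi n N f [] w) * a * (phi n N f [DT] w * (w (n+j) / real N)) * 1 + rho n N w * exp (a * phi n N f [] w) * 0)) (at 0)"
    using d3[OF RY[OF assms(1)] LY[OF sm assms(1) assms(2), of "[]"], where C="\<lambda>s. 1" and DC=0 and a=a] by simp
  then have "((\<lambda>s. Gf n N f (w(n+j := w (n+j) + s))) has_real_derivative
      w (n+j) * exp (a * phi n N f [] w) * (2 + a * rho n N w * phi n N f [DT] w / real N)) (at 0)"
    unfolding Gf_phi a_def[symmetric] by (simp add: algebra_simps)
  then show ?thesis unfolding pdz_def by (intro DERIV_imp_deriv) simp
qed

lemma H1:
  assumes "k < n" "l < n" "rho n N z > 0"
  shows "hessz (Gf n N f) z k l = rho n N z * exp (a * phi n N f [] z) * a * phi n N f [DX k] z * (a * phi n N f [DX l] z)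
     + rho n N z * exp (a * phi n N f [] z) * (a * phi n N f [DX k, DX l] z)"
proof -
  have ev: "eventually (\<lambda>s. pdz l (Gf n N f) (z(k := z k + s)) = rho n N (z(k := z k + s)) * exp (a * phi n N f [] (z(k := z k + s))) * (a * phi n N f [DX l] (z(k := z k + s)))) (nhds 0)"
    using EV[OF assms(3), of k] assms(1) by (auto elim!: eventually_mono intro: P1x[OF assms(2)])
  have d: "((\<lambda>s. rho n N (z(k := z k + s)) * exp (a * phi n N f [] (z(k := z k + s))) * (a * phi n N f [DX l] (z(k := z k + s)))) has_real_derivative
     (0 * exp (a * phi n N f [] z) * (a * phi n N f [DX l] z) + rho n N z * exp (a * phi n N f [] z) * a * phi n N f [DX k] z * (a * phi n N f [DX l] z)
      + rho n N z * exp (a * phi n N f [] z) * (a * phi n N f [DX k, DX l] z))) (at 0)"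
    using d3[OF RX[OF assms(1)] LX[OF sm assms(1) assms(3) Npos, of "[]"] DERIV_cmult[OF LX[OF sm assms(1) assms(3) Npos, of "[DX l]"], of a], where a=a]
      assms by (simp add: dir_ok_def)
  show ?thesis unfolding hessz_def pdz_def[of k]
    using deriv_ev[OF ev d] by simp
qed

lemma H2:
  assumes "j < N" "i < n" "rho n N z > 0"
  shows "hessz (Gf n N f) z (n+j) i = 2 * z (n+j) * exp (a * phi n N f [] z) * (a * phi n N f [DX i] z)
     + rho n N z * exp (a * phi n N f [] z) * a * (phi n N f [DT] z * (z (n+j) / real N)) * (a * phi n N f [DX i] z)
     + rho n N z * exp (a * phi n N f [] z) * (a * (phi n N f [DT, DX i] z * (z (n+j) / real N)))"
proof -
  have ev: "eventually (\<lambda>s. pdz i (Gf n N f) (z(n+j := z (n+j) + s)) = rho n N (z(n+j := z (n+j) + s)) * exp (a * phi n N f [] (z(n+j := z (n+j) + s))) * (a * phi n N f [DX i] (z(n+j := z (n+j) + s)))) (nhds 0)"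
    using EV[OF assms(3), of "n+j"] assms(1) by (auto elim!: eventually_mono intro: P1x[OF assms(2)])
  have d: "((\<lambda>s. rho n N (z(n+j := z (n+j) + s)) * exp (a * phi n N f [] (z(n+j := z (n+j) + s))) * (a * phi n N f [DX i] (z(n+j := z (n+j) + s)))) has_real_derivative
     (2 * z (n+j) * exp (a * phi n N f [] z) * (a * phi n N f [DX i] z)
     + rho n N z * exp (a * phi n N f [] z) * a * (phi n N f [DT] z * (z (n+j) / real N)) * (a * phi n N f [DX i] z)
     + rho n N z * exp (a * phi n N f [] z) * (a * (phi n N f [DT, DX i] z * (z (n+j) / real N))))) (at 0)"
    using d3[OF RY[OF assms(1)] LY[OF sm assms(1) assms(3), of "[]"] DERIV_cmult[OF LY[OF sm assms(1) assms(3), of "[DX i]"], of a], where a=a]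
      assms by (simp add: dir_ok_def)
  show ?thesis unfolding hessz_def pdz_def[of "n+j"]
    using deriv_ev[OF ev d] by simp
qed

lemma H3:
  assumes "i < n" "j < N" "rho n N z > 0"
  shows "hessz (Gf n N f) z i (n+j) = z (n+j) * exp (a * phi n N f [] z) * a * phi n N f [DX i] z * (2 + a * rho n N z * phi n N f [DT] z / real N)
     + z (n+j) * exp (a * phi n N f [] z) * (a * (rho n N z * phi n N f [DX i, DT] z) / real N)"
proof -
  have "eventually (\<lambda>s. rho n N (z(i := z i + s)) > 0) (nhds 0)"

    using EV[OF assms(3), of i] assms(1) by simp
  then have ev: "eventually (\<lambda>s. pdz (n+j) (Gf n N f) (z(i := z i + s)) = (z(i := z i + s)) (n+j) * exp (a * phi n N f [] (z(i := z i + s))) * (2 + a * rho n N (z(i := z i + s)) * phi n N f [DT] (z(i := z i + s)) / real N)) (nhds 0)"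
    by (rule eventually_mono) (erule P1y[OF assms(2)])
  have dC: "((\<lambda>s. 2 + a * rho n N (z(i := z i + s)) * phi n N f [DT] (z(i := z i + s)) / real N) has_real_derivative
     a * (rho n N z * phi n N f [DX i, DT] z) / real N) (at 0)"
    using assms by (simp add: rho_upd_x) (auto intro!: derivative_eq_intros LX[OF sm assms(1) assms(3) Npos, of "[DT]"] simp: dir_ok_def)
  have d: "((\<lambda>s. (z(i := z i + s)) (n+j) * exp (a * phi n N f [] (z(i := z i + s))) * (2 + a * rho n N (z(i := z i + s)) * phi n N f [DT] (z(i := z i + s)) / real N)) has_real_derivative
     (z (n+j) * exp (a * phi n N f [] z) * a * phi n N f [DX i] z * (2 + a * rho n N z * phi n N f [DT] z / real N)
     + z (n+j) * exp (a * phi n N f [] z) * (a * (rho n N z * phi n N f [DX i, DT] z) / real N))) (at 0)"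
    using d3[OF CD[of z i "n+j"] LX[OF sm assms(1) assms(3) Npos, of "[]"] dC, where a=a] assms by simp
  show ?thesis unfolding hessz_def pdz_def[of i]
    using deriv_ev[OF ev d] by simp
qed

lemma H4:
  assumes "k < N" "j < N" "rho n N z > 0"
  shows "hessz (Gf n N f) z (n+k) (n+j) = (if k = j then 1 else 0) * exp (a * phi n N f [] z) * (2 + a * rho n N z * phi n N f [DT] z / real N)
     + z (n+j) * exp (a * phi n N f [] z) * a * (phi n N f [DT] z * (z (n+k) / real N)) * (2 + a * rho n N z * phi n N f [DT] z / real N)
     + z (n+j) * exp (a * phi n N f [] z) * (a * (2 * z (n+k) * phi n N f [DT] z + rho n N z * (phi n N f [DT, DT] z * (z (n+k) / real N))) / real N)"
proof -
  have "eventually (\<lambda>s. rho n N (z(n+k := z (n+k) + s)) > 0) (nhds 0)"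
    using EV[OF assms(3), of "n+k"] assms(1) by simp
  then have ev: "eventually (\<lambda>s. pdz (n+j) (Gf n N f) (z(n+k := z (n+k) + s)) = (z(n+k := z (n+k) + s)) (n+j) * exp (a * phi n N f [] (z(n+k := z (n+k) + s))) * (2 + a * rho n N (z(n+k := z (n+k) + s)) * phi n N f [DT] (z(n+k := z (n+k) + s)) / real N)) (nhds 0)"
    by (rule eventually_mono) (erule P1y[OF assms(2)])
  have dC: "((\<lambda>s. 2 + a * rho n N (z(n+k := z (n+k) + s)) * phi n N f [DT] (z(n+k := z (n+k) + s)) / real N) has_real_derivative
     a * (2 * z (n+k) * phi n N f [DT] z + rho n N z * (phi n N f [DT, DT] z * (z (n+k) / real N))) / real N) (at 0)"
  proof -
    have m: "((\<lambda>s. rho n N (z(n+k := z (n+k) + s)) * phi n N f [DT] (z(n+k := z (n+k) + s))) has_real_derivative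
       2 * z (n+k) * phi n N f [DT] z + phi n N f [DT, DT] z * (z (n+k) / real N) * rho n N z) (at 0)"
      using DERIV_mult[OF RY[OF assms(1)] LY[OF sm assms(1) assms(3), of "[DT]"]] by (simp add: dir_ok_def)
    have feq: "(\<lambda>s. 2 + a * rho n N (z(n+k := z (n+k) + s)) * phi n N f [DT] (z(n+k := z (n+k) + s)) / real N)
       = (\<lambda>s. 2 + a / real N * (rho n N (z(n+k := z (n+k) + s)) * phi n N f [DT] (z(n+k := z (n+k) + s))))"
      by (rule ext) simp
    show ?thesis unfolding feq
      using DERIV_add[OF DERIV_const[of 2] DERIV_cmult[OF m, of "a / real N"]] by (simp add: algebra_simps add_divide_distrib)
  qed
  have d: "((\<lambda>s. (z(n+k := z (n+k) + s)) (n+j) * exp (a * phi n N f [] (z(n+k := z (n+k) + s))) * (2 + a * rho n N (z(n+k := z (n+k) + s)) * phi n N f [DT] (z(n+k := z (n+k) + s)) / real N)) has_real_derivative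
     ((if k = j then 1 else 0) * exp (a * phi n N f [] z) * (2 + a * rho n N z * phi n N f [DT] z / real N)
     + z (n+j) * exp (a * phi n N f [] z) * a * (phi n N f [DT] z * (z (n+k) / real N)) * (2 + a * rho n N z * phi n N f [DT] z / real N)
     + z (n+j) * exp (a * phi n N f [] z) * (a * (2 * z (n+k) * phi n N f [DT] z + rho n N z * (phi n N f [DT, DT] z * (z (n+k) / real N))) / real N))) (at 0)"
    using d3[OF CD[of z "n+k" "n+j"] LY[OF sm assms(1) assms(3), of "[]"] dC, where a=a] assms by simp
  show ?thesis unfolding hessz_def pdz_def[of "n+k"]
    using deriv_ev[OF ev d] by simp
qed

end

lemma abs_mult_le: "\<bar>x\<bar> \<le> A \<Longrightarrow> \<bar>y\<bar> \<le> B \<Longrightarrow> \<bar>x * y\<bar> \<le> A * B"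
  for x y A B :: real
  by (simp add: abs_mult mult_mono')

lemma sum_split: "(\<Sum>k<n+N. g k) = (\<Sum>i<n. g i) + (\<Sum>j<N. g (n+j))" for n N :: nat and g :: "nat \<Rightarrow> 'a::comm_monoid_add"
  by (induction N) (simp_all add: ac_simps)

lemma sum_split_sq:
  fixes Q :: "nat \<Rightarrow> nat \<Rightarrow> real"
  assumes m: "m > 0"
  shows "(\<Sum>k<m. \<Sum>l<m. (Q k l - (if k = l then (\<Sum>i<m. Q i i) / real m else 0))^2)
       = (\<Sum>k<m. \<Sum>l<m. (Q k l)^2) - (\<Sum>i<m. Q i i)^2 / real m"
proof -
  define t where "t = (\<Sum>i<m. Q i i)"
  have "(\<Sum>k<m. \<Sum>l<m. (Q k l - (if k = l then t / real m else 0))^2)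
     = (\<Sum>k<m. (\<Sum>l<m. (Q k l)^2) - 2 * (t / real m) * Q k k + (t / real m)^2)"
  proof (rule sum.cong[OF refl])
    fix k assume k: "k \<in> {..<m}"
    have "(\<Sum>l<m. (Q k l - (if k = l then t / real m else 0))^2)
       = (\<Sum>l<m. (Q k l)^2 + (if k = l then (t / real m)^2 - 2 * (t / real m) * Q k k else 0))"
      by (rule sum.cong) (auto simp: power2_eq_square algebra_simps)
    also have "\<dots> = (\<Sum>l<m. (Q k l)^2) + ((t / real m)^2 - 2 * (t / real m) * Q k k)"
      using k by (simp add: sum.distrib)
    finally show "(\<Sum>l<m. (Q k l - (if k = l then t / real m else 0))^2) = (\<Sum>l<m. (Q k l)^2) - 2 * (t / real m) * Q k k + (t / real m)^2"
      by simp
  qed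
  also have "\<dots> = (\<Sum>k<m. \<Sum>l<m. (Q k l)^2) - 2 * (t / real m) * t + real m * (t / real m)^2"
    by (simp add: sum.distrib sum_subtractf sum_distrib_left t_def)
  also have "\<dots> = (\<Sum>k<m. \<Sum>l<m. (Q k l)^2) - t^2 / real m"
    using m by (simp add: field_simps power2_eq_square)
  finally show ?thesis unfolding t_def .
qed


context
  fixes n N :: nat and c \<tau> W pt ptt :: real and y p1 pti pit :: "nat \<Rightarrow> real" and p2 :: "nat \<Rightarrow> nat \<Rightarrow> real"
  assumes n1: "n \<ge> 1" and N3: "N \<ge> 3" and cdef: "c = 2 * real N / (real (n + N) - 2)"
    and tpos: "\<tau> > 0" and tinv: "1 / \<tau> \<le> W" and tW: "\<tau> \<le> W" and W1: "W \<ge> 1" and nW: "real n \<le> W"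
    and bp1: "\<And>i. i < n \<Longrightarrow> \<bar>p1 i\<bar> \<le> W"
    and bp2: "\<And>i k. i < n \<Longrightarrow> k < n \<Longrightarrow> \<bar>p2 i k\<bar> \<le> W"
    and bpt: "\<bar>pt\<bar> \<le> W" and bptt: "\<bar>ptt\<bar> \<le> W"
    and bpti: "\<And>i. i < n \<Longrightarrow> \<bar>pti i\<bar> \<le> W"
    and bpit: "\<And>i. i < n \<Longrightarrow> \<bar>pit i\<bar> \<le> W"
    and rhoy: "(\<Sum>j<N. (y j)^2) = 2 * real N * \<tau>"
begin

lemma c_pos: "c > 0"
  using n1 N3 by (simp add: cdef)

lemma c_le3: "c \<le> 3"
proof -
  have d: "real (n + N) - 2 > 0" using n1 N3 by simp
  have "2 * real N \<le> 3 * (real (n + N) - 2)" using n1 N3 by simp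
  then show ?thesis unfolding cdef using d by (simp add: divide_le_eq)
qed

lemma c_half: "\<bar>c / 2 - 1\<bar> \<le> 2 * W / real N"
proof -
  have d: "real (n + N) - 2 > 0" using n1 N3 by simp
  have e: "c / 2 - 1 = (2 - real n) / (real (n + N) - 2)"
    unfolding cdef using d by (simp add: field_simps)
  have "\<bar>2 - real n\<bar> \<le> real n" using n1 by simp
  moreover have "1 / (real (n + N) - 2) \<le> 2 / real N" using d n1 N3 by (simp add: divide_simps)
  ultimately have "\<bar>2 - real n\<bar> * (1 / (real (n + N) - 2)) \<le> real n * (2 / real N)"
    using d by (intro mult_mono) auto
  then have "\<bar>c / 2 - 1\<bar> \<le> real n * (2 / real N)" unfolding e using d by (simp add: abs_div)
  also have "\<dots> \<le> W * (2 / real N)" using nW by (intro mult_right_mono) auto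
  finally show ?thesis by simp
qed

lemma Npos: "real N > 0" using N3 by simp

lemma y_sq: "j < N \<Longrightarrow> (y j)^2 \<le> 2 * real N * \<tau>"
  unfolding rhoy[symmetric] by (rule member_le_sum) auto

lemma y_abs: "j < N \<Longrightarrow> \<bar>y j\<bar> \<le> 2 * W * sqrt (real N)"
proof -
  assume j: "j < N"
  have "\<bar>y j\<bar> = sqrt ((y j)^2)" by simp
  also have "\<dots> \<le> sqrt (2 * \<tau> * real N)" by (rule real_sqrt_le_mono) (use y_sq[OF j] in \<open>simp add: mult_ac\<close>)
  also have "\<dots> = sqrt (2 * \<tau>) * sqrt (real N)" by (simp add: real_sqrt_mult)
  also have "\<dots> \<le> 2 * W * sqrt (real N)"
  proof -
    have ww: "W * 1 \<le> W * W" by (rule mult_left_mono) (use W1 in auto)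
    have s2: "2 * \<tau> \<le> (2 * W)^2" using ww tW W1 unfolding power2_eq_square by linarith
    have "sqrt (2 * \<tau>) \<le> sqrt ((2 * W)^2)" by (rule real_sqrt_le_mono[OF s2])
    also have "\<dots> = 2 * W" using W1 by (simp only: real_sqrt_abs)
    finally have "sqrt (2 * \<tau>) \<le> 2 * W" .
    then show ?thesis by (rule mult_right_mono) simp
  qed
  finally show ?thesis .
qed

lemma yy_abs: "j < N \<Longrightarrow> k < N \<Longrightarrow> \<bar>y j * y k\<bar> \<le> 2 * real N * \<tau>"
proof -
  assume a: "j < N" "k < N"
  have "\<bar>y j * y k\<bar> \<le> ((y j)^2 + (y k)^2) / 2"
    using sum_squares_bound[of "\<bar>y j\<bar>" "\<bar>y k\<bar>"] by (simp add: abs_mult)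
  then show ?thesis using y_sq[OF a(1)] y_sq[OF a(2)] by simp
qed


lemma W2: "W \<le> W^2" and W3: "W^2 \<le> W^3" and W0: "W \<ge> 0"
proof -
  show "W \<le> W^2" using W1 by (simp add: power2_eq_square)
  show "W^2 \<le> W^3" using W1 by (simp add: power2_eq_square power3_eq_cube)
  show "W \<ge> 0" using W1 by simp
qed

lemma inv_tau: "\<bar>1 / \<tau>\<bar> \<le> W" using tinv tpos by simp

lemma cN: "c / real N \<le> 1" and cN0: "c / real N \<ge> 0"
  using c_le3 c_pos N3 by (auto simp: divide_simps)

lemma B_D:
  assumes "k < n" "l < n"
  shows "\<bar>(c / 2 - 1) * p2 k l + c^2 / (2 * real N) * p1 k * p1 l\<bar> \<le> 7 * W^2 / real N"
proof -
  have a: "\<bar>(c / 2 - 1) * p2 k l\<bar> \<le> (2 * W / real N) * W"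
    by (rule abs_mult_le[OF c_half bp2[OF assms]])
  have c2: "c^2 \<le> 9" using mult_mono[OF c_le3 c_le3] c_pos by (simp add: power2_eq_square)
  have "\<bar>c^2 / (2 * real N)\<bar> \<le> 9 / (2 * real N)" using c2 Npos by (simp add: divide_right_mono)
  then have "\<bar>c^2 / (2 * real N) * p1 k * p1 l\<bar> \<le> 9 / (2 * real N) * W * W"
    using abs_mult_le[OF abs_mult_le[OF _ bp1[OF assms(1)]] bp1[OF assms(2)]] by blast
  with a have "\<bar>(c / 2 - 1) * p2 k l + c^2 / (2 * real N) * p1 k * p1 l\<bar> \<le> (2 * W / real N) * W + 9 / (2 * real N) * W * W"
    by linarith
  also have "\<dots> = 6.5 * W^2 / real N" by (simp add: field_simps power2_eq_square)
  also have "\<dots> \<le> 7 * W^2 / real N" using Npos W0 by (simp add: divide_simps)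
  finally show ?thesis .
qed

lemma B_alpha:
  assumes "i < n" "\<bar>q\<bar> \<le> W"
  shows "\<bar>c / real N * (p1 i / (2 * \<tau>) + c * p1 i * pt / (2 * real N) + q / 2)\<bar> \<le> 5 * W^2 / real N"
    and "\<bar>c / real N * (p1 i / (2 * \<tau>) + c * pt * p1 i / (2 * real N) + q / 2)\<bar> \<le> 5 * W^2 / real N"
proof -
  have h1: "\<bar>p1 i / (2 * \<tau>)\<bar> \<le> W * W / 2"
    using abs_mult_le[OF bp1[OF assms(1)] inv_tau] by simp
  have cc: "\<bar>c / (2 * real N)\<bar> \<le> 1 / 2" using cN cN0 by simp
  have h2: "\<bar>c * p1 i * pt / (2 * real N)\<bar> \<le> 1 / 2 * W * W"
    using abs_mult_le[OF abs_mult_le[OF cc bp1[OF assms(1)]] bpt] by (simp add: mult_ac)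
  have h3: "\<bar>q / 2\<bar> \<le> W * W / 2" using assms(2) W2 by (simp add: power2_eq_square)
  have s: "\<bar>p1 i / (2 * \<tau>) + c * p1 i * pt / (2 * real N) + q / 2\<bar> \<le> 3 / 2 * W^2"
    using h1 h2 h3 unfolding power2_eq_square by arith
  have cc3: "\<bar>c / real N\<bar> \<le> 3 / real N" using c_le3 c_pos Npos by (simp add: divide_right_mono)
  have "\<bar>c / real N * (p1 i / (2 * \<tau>) + c * p1 i * pt / (2 * real N) + q / 2)\<bar> \<le> 3 / real N * (3 / 2 * W^2)"
    by (rule abs_mult_le[OF cc3 s])
  also have "\<dots> \<le> 5 * W^2 / real N" using Npos W0 by (simp add: divide_simps)
  finally show "\<bar>c / real N * (p1 i / (2 * \<tau>) + c * p1 i * pt / (2 * real N) + q / 2)\<bar> \<le> 5 * W^2 / real N" .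
  then show "\<bar>c / real N * (p1 i / (2 * \<tau>) + c * pt * p1 i / (2 * real N) + q / 2)\<bar> \<le> 5 * W^2 / real N"
    by (simp add: mult_ac)
qed

lemma B_gam: "\<bar>c * pt / (2 * real N)\<bar> \<le> 2 * W / real N"
proof -
  have "\<bar>c * pt / (2 * real N)\<bar> = \<bar>c / real N\<bar> * \<bar>pt\<bar> / 2" by (simp add: abs_mult)
  also have "\<dots> \<le> (3 / real N) * W / 2"
    using c_le3 c_pos Npos bpt by (intro divide_right_mono mult_mono) (auto simp: divide_right_mono)
  also have "\<dots> \<le> 2 * W / real N" using W0 Npos by (simp add: divide_simps)
  finally show ?thesis .
qed

lemma B_mu: "\<bar>c / (2 * real N) * (pt * (2 + 2 * c * \<tau> * pt / real N) + 2 * pt + 2 * \<tau> * ptt)\<bar> \<le> 12 * W^3 / real N"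
proof -
  have cc: "\<bar>c / (2 * real N)\<bar> \<le> 3 / (2 * real N)" using c_le3 c_pos Npos by (simp add: divide_right_mono)
  have ct: "\<bar>2 * c * \<tau> * pt / real N\<bar> \<le> 2 * (W * W)"
  proof -
    have "\<bar>2 * c * \<tau> * pt / real N\<bar> = 2 * (c / real N) * \<bar>\<tau>\<bar> * \<bar>pt\<bar>" using c_pos by (simp add: abs_mult)
    also have "\<dots> \<le> 2 * 1 * W * W" using cN cN0 tW tpos bpt by (intro mult_mono) auto
    finally show ?thesis by simp
  qed
  have e1: "\<bar>2 + 2 * c * \<tau> * pt / real N\<bar> \<le> 4 * W^2" using abs_triangle_ineq[of 2 "2 * c * \<tau> * pt / real N"] ct W1 W2 unfolding power2_eq_square by (smt (verit))
  have e2: "\<bar>pt * (2 + 2 * c * \<tau> * pt / real N)\<bar> \<le> W * (4 * W^2)" by (rule abs_mult_le[OF bpt e1])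
  have e3: "\<bar>2 * \<tau> * ptt\<bar> \<le> 2 * W * W" using abs_mult_le[OF _ bptt, of "2 * \<tau>" "2 * W"] tW tpos by simp
  have "\<bar>pt * (2 + 2 * c * \<tau> * pt / real N) + 2 * pt + 2 * \<tau> * ptt\<bar> \<le> 8 * W^3"
  proof -
    have "W * (4 * W^2) = 4 * W^3" "2 * W * W = 2 * W^2" by (simp_all add: power2_eq_square power3_eq_cube)
    then show ?thesis using e2 e3 bpt W2 W3 by (smt (verit))
  qed
  then have "\<bar>c / (2 * real N) * (pt * (2 + 2 * c * \<tau> * pt / real N) + 2 * pt + 2 * \<tau> * ptt)\<bar> \<le> 3 / (2 * real N) * (8 * W^3)"
    by (rule abs_mult_le[OF cc])
  then show ?thesis by simp
qed


lemma W13: "W \<le> W^3" using W2 W3 by linarith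

lemma sqrtN: "sqrt (real N) * sqrt (real N) = real N" using Npos by simp

lemma sqrtN_pos: "sqrt (real N) > 0" using Npos by simp

context
  fixes Q :: "nat \<Rightarrow> nat \<Rightarrow> real"
  assumes Qdef: "\<And>k l. Q k l = (if k < n \<and> l < n then (p2 k l - (if k = l then 1 / (2 * \<tau>) else 0)) + ((c / 2 - 1) * p2 k l + c^2 / (2 * real N) * p1 k * p1 l)
      else if k < n then y (l - n) * (c / real N * (p1 k / (2 * \<tau>) + c * p1 k * pt / (2 * real N) + pit k / 2))
      else if l < n then y (k - n) * (c / real N * (p1 l / (2 * \<tau>) + c * pt * p1 l / (2 * real N) + pti l / 2))
      else (if k = l then c * pt / (2 * real N) else 0)
         + y (k - n) * y (l - n) * (c / (2 * real N) * (pt * (2 + 2 * c * \<tau> * pt / real N) + 2 * pt + 2 * \<tau> * ptt)) / (2 * real N * \<tau>))"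
begin

lemma off_bound:
  assumes j: "j < N" and a: "\<bar>A\<bar> \<le> 5 * W^2 / real N"
  shows "\<bar>y j * A\<bar> \<le> 10 * W^3 / sqrt (real N)"
proof -
  have "\<bar>y j * A\<bar> \<le> (2 * W * sqrt (real N)) * (5 * W^2 / real N)"
    by (rule abs_mult_le[OF y_abs[OF j] a])
  also have "\<dots> = 10 * W^3 * (sqrt (real N) / real N)"
    by (simp add: power2_eq_square power3_eq_cube)
  also have "sqrt (real N) / real N = sqrt (real N) / (sqrt (real N) * sqrt (real N))"
    by (simp only: sqrtN)
  also have "10 * W^3 * (sqrt (real N) / (sqrt (real N) * sqrt (real N))) = 10 * W^3 / sqrt (real N)"
  proof -
    have gen: "\<And>s X::real. s > 0 \<Longrightarrow> X * (s / (s * s)) = X / s" by (auto simp: field_simps)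
    show ?thesis by (rule gen[OF sqrtN_pos])
  qed
  finally show ?thesis .
qed

lemma yy_part:
  assumes "j < N" "k < N"
  shows "\<bar>y j * y k * M / (2 * real N * \<tau>)\<bar> \<le> \<bar>M\<bar>"
proof -
  have p: "2 * real N * \<tau> > 0" using Npos tpos by simp
  have "\<bar>y j * y k * M / (2 * real N * \<tau>)\<bar> = (\<bar>y j * y k\<bar> / (2 * real N * \<tau>)) * \<bar>M\<bar>"
    using p tpos by (simp add: abs_mult abs_div)
  also have "\<dots> \<le> 1 * \<bar>M\<bar>"
    using yy_abs[OF assms] p by (intro mult_right_mono) (auto simp: divide_le_eq)
  finally show ?thesis by simp
qed

lemma Q_entry:
  assumes k: "k < n + N" and l: "l < n + N"
  shows "\<bar>Q k l + (if k = l then 1 / (2 * \<tau>) else 0)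
           - (if k < n \<and> l < n then p2 k l else if n \<le> k \<and> n \<le> l then (if k = l then 1 / (2 * \<tau>) else 0) else 0)\<bar>
         \<le> (if (k < n) = (l < n) then 14 * W^3 / real N else 10 * W^3 / sqrt (real N))"
proof (cases "k < n")
  case kx: True
  show ?thesis
  proof (cases "l < n")
    case True
    have "\<bar>(c / 2 - 1) * p2 k l + c^2 / (2 * real N) * p1 k * p1 l\<bar> \<le> 7 * W^2 / real N" by (rule B_D[OF kx True])
    also have "\<dots> \<le> 14 * W^3 / real N"
    proof -
      have "7 * W^2 \<le> 14 * W^3" using W3 zero_le_power2[of W] by linarith
      then show ?thesis by (rule divide_right_mono) (use Npos in simp)
    qed
    finally show ?thesis using kx True by (simp add: Qdef)
  next
    case False
    then obtain j where j: "l = n + j" "j < N" using l by (metis add_diff_inverse_nat nat_add_left_cancel_less)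
    show ?thesis using kx j off_bound[OF j(2) B_alpha(1)[OF kx bpit[OF kx]]] by (simp add: Qdef)
  qed
next
  case kF: False
  then obtain j where j: "k = n + j" "j < N" using k by (metis add_diff_inverse_nat nat_add_left_cancel_less)
  show ?thesis
  proof (cases "l < n")
    case True
    show ?thesis using True j off_bound[OF j(2) B_alpha(2)[OF True bpti[OF True]]] by (simp add: Qdef)
  next
    case False
    then obtain i where i: "l = n + i" "i < N" using l by (metis add_diff_inverse_nat nat_add_left_cancel_less)
    define M where "M = c / (2 * real N) * (pt * (2 + 2 * c * \<tau> * pt / real N) + 2 * pt + 2 * \<tau> * ptt)"
    have e: "Q k l + (if k = l then 1 / (2 * \<tau>) else 0)
           - (if k < n \<and> l < n then p2 k l else if n \<le> k \<and> n \<le> l then (if k = l then 1 / (2 * \<tau>) else 0) else 0)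
       = (if k = l then c * pt / (2 * real N) else 0) + y j * y i * M / (2 * real N * \<tau>)"
      using i j by (simp add: Qdef M_def)
    have g: "\<bar>(if k = l then c * pt / (2 * real N) else 0)\<bar> \<le> 2 * W / real N"
      using B_gam W0 Npos by auto
    have "\<bar>y j * y i * M / (2 * real N * \<tau>)\<bar> \<le> 12 * W^3 / real N"
      using yy_part[OF j(2) i(2), of M] B_mu unfolding M_def by linarith
    with g have "\<bar>(if k = l then c * pt / (2 * real N) else 0) + y j * y i * M / (2 * real N * \<tau>)\<bar> \<le> 2 * W / real N + 12 * W^3 / real N"
      by linarith
    also have "\<dots> \<le> 14 * W^3 / real N" using W13 Npos by (simp add: divide_simps)
    finally show ?thesis unfolding e using i j by simp
  qed
qed


lemma sum_abs_le: "(\<And>i. i < n' \<Longrightarrow> \<bar>f i\<bar> \<le> B) \<Longrightarrow> \<bar>\<Sum>i<n'. f i\<bar> \<le> real n' * B"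
  for f :: "nat \<Rightarrow> real"
proof -
  assume h: "\<And>i. i < n' \<Longrightarrow> \<bar>f i\<bar> \<le> B"
  have "\<bar>\<Sum>i<n'. f i\<bar> \<le> (\<Sum>i<n'. \<bar>f i\<bar>)" by (rule sum_abs)
  also have "\<dots> \<le> (\<Sum>i<n'. B)" using h by (intro sum_mono) auto
  finally show ?thesis by simp
qed

lemma Q_decomp:
  defines "al \<equiv> \<lambda>i. c / real N * (p1 i / (2 * \<tau>) + c * p1 i * pt / (2 * real N) + pit i / 2)"
    and "be \<equiv> \<lambda>i. c / real N * (p1 i / (2 * \<tau>) + c * pt * p1 i / (2 * real N) + pti i / 2)"
    and "ga \<equiv> c * pt / (2 * real N)"
    and "mu \<equiv> c / (2 * real N) * (pt * (2 + 2 * c * \<tau> * pt / real N) + 2 * pt + 2 * \<tau> * ptt)"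
    and "LD \<equiv> \<lambda>k l. (p2 k l - (if k = l then 1 / (2 * \<tau>) else 0)) + ((c / 2 - 1) * p2 k l + c^2 / (2 * real N) * p1 k * p1 l)"
  shows "(\<Sum>k<n+N. \<Sum>l<n+N. (Q k l)^2) = (\<Sum>i<n. \<Sum>i'<n. (LD i i')^2)
           + (\<Sum>i<n. (al i)^2) * (2 * real N * \<tau>) + (\<Sum>i<n. (be i)^2) * (2 * real N * \<tau>)
           + (real N * ga^2 + 2 * ga * mu + mu^2)"
    and "(\<Sum>i<n+N. Q i i) = (\<Sum>i<n. LD i i) + real N * ga + mu"
proof -
  have r: "2 * real N * \<tau> > 0" using Npos tpos by simp
  have xx: "\<And>i i'. i < n \<Longrightarrow> i' < n \<Longrightarrow> Q i i' = LD i i'" by (simp add: Qdef LD_def)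
  have xy: "\<And>i j. i < n \<Longrightarrow> Q i (n + j) = y j * al i" by (simp add: Qdef al_def)
  have yx: "\<And>i j. i < n \<Longrightarrow> Q (n + j) i = y j * be i" by (simp add: Qdef be_def)
  have yy: "\<And>j j'. Q (n + j) (n + j') = (if j = j' then ga else 0) + y j * y j' * mu / (2 * real N * \<tau>)"
    by (simp add: Qdef ga_def mu_def)
  have Sxy: "(\<Sum>i<n. \<Sum>j<N. (Q i (n + j))^2) = (\<Sum>i<n. (al i)^2) * (2 * real N * \<tau>)"
  proof -
    have "(\<Sum>i<n. \<Sum>j<N. (Q i (n + j))^2) = (\<Sum>i<n. (al i)^2 * (\<Sum>j<N. (y j)^2))"
      by (simp add: xy power_mult_distrib sum_distrib_left mult_ac)
    also have "\<dots> = (\<Sum>i<n. (al i)^2) * (2 * real N * \<tau>)" by (simp add: rhoy sum_distrib_right)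
    finally show ?thesis .
  qed
  have Syx: "(\<Sum>j<N. \<Sum>i<n. (Q (n + j) i)^2) = (\<Sum>i<n. (be i)^2) * (2 * real N * \<tau>)"
  proof -
    have "(\<Sum>j<N. \<Sum>i<n. (Q (n + j) i)^2) = (\<Sum>i<n. \<Sum>j<N. (Q (n + j) i)^2)" by (rule sum.swap)
    also have "\<dots> = (\<Sum>i<n. (be i)^2 * (\<Sum>j<N. (y j)^2))"
      by (simp add: yx power_mult_distrib sum_distrib_left mult_ac)
    also have "\<dots> = (\<Sum>i<n. (be i)^2) * (2 * real N * \<tau>)" by (simp add: rhoy sum_distrib_right)
    finally show ?thesis .
  qed
  have Syy: "(\<Sum>j<N. \<Sum>j'<N. (Q (n + j) (n + j'))^2) = real N * ga^2 + 2 * ga * mu + mu^2"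
  proof -
    have "(\<Sum>j<N. \<Sum>j'<N. (Q (n + j) (n + j'))^2)
        = (\<Sum>j<N. \<Sum>j'<N. (if j = j' then ga^2 + 2 * ga * mu * (y j)^2 / (2 * real N * \<tau>) else 0)
             + (y j)^2 * (y j')^2 * mu^2 / (2 * real N * \<tau>)^2)"
      using tpos Npos by (intro sum.cong refl) (unfold yy, auto simp: power2_eq_square field_simps)
    also have "\<dots> = (\<Sum>j<N. ga^2 + 2 * ga * mu * (y j)^2 / (2 * real N * \<tau>)
             + (y j)^2 * (\<Sum>j'<N. (y j')^2) * mu^2 / (2 * real N * \<tau>)^2)"
      by (simp add: sum.distrib sum_distrib_left sum_distrib_right sum_divide_distrib mult_ac)
    also have "\<dots> = real N * ga^2 + 2 * ga * mu * (\<Sum>j<N. (y j)^2) / (2 * real N * \<tau>)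
             + (\<Sum>j<N. (y j)^2) * (\<Sum>j'<N. (y j')^2) * mu^2 / (2 * real N * \<tau>)^2"
      by (simp add: sum.distrib sum_distrib_left sum_distrib_right sum_divide_distrib mult_ac)
    also have "\<dots> = real N * ga^2 + 2 * ga * mu + mu^2"
      using r tpos Npos unfolding rhoy by (simp add: power2_eq_square)
    finally show ?thesis .
  qed
  show "(\<Sum>k<n+N. \<Sum>l<n+N. (Q k l)^2) = (\<Sum>i<n. \<Sum>i'<n. (LD i i')^2)
           + (\<Sum>i<n. (al i)^2) * (2 * real N * \<tau>) + (\<Sum>i<n. (be i)^2) * (2 * real N * \<tau>)
           + (real N * ga^2 + 2 * ga * mu + mu^2)"
    unfolding sum_split[where n=n and N=N] sum.distrib Sxy[symmetric] Syx[symmetric] Syy[symmetric]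
    by (simp add: xx)
  have "(\<Sum>j<N. Q (n + j) (n + j)) = (\<Sum>j<N. ga + (y j)^2 * mu / (2 * real N * \<tau>))"
    by (intro sum.cong refl) (simp add: yy power2_eq_square)
  also have "\<dots> = real N * ga + mu"
    using r tpos Npos by (simp add: sum.distrib sum_divide_distrib[symmetric] sum_distrib_right[symmetric] rhoy)
  finally show "(\<Sum>i<n+N. Q i i) = (\<Sum>i<n. LD i i) + real N * ga + mu"
    unfolding sum_split[where n=n and N=N] by (simp add: xx)
qed

lemma Wmono: "a \<le> b \<Longrightarrow> W^a \<le> W^b" using W1 by (rule power_increasing[rotated])

lemma invN2: "K \<ge> 0 \<Longrightarrow> K / (real N)^2 \<le> K / (3 * real N)"
  using N3 Npos by (intro divide_left_mono) (auto simp: power2_eq_square)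

lemma sq_le: "\<bar>x\<bar> \<le> B \<Longrightarrow> x^2 \<le> B^2" for x B :: real
  by (metis abs_ge_zero power2_abs power_mono)

lemma Q_norm:
  "\<bar>(\<Sum>k<n+N. \<Sum>l<n+N. (Q k l - (if k = l then (\<Sum>i<n+N. Q i i) / real (n+N) else 0))^2)
     - (\<Sum>i<n. \<Sum>j<n. (p2 i j - (if i = j then 1 / (2 * \<tau>) else 0))^2)\<bar> \<le> 400 * W^6 / real N"
proof -
  define al where "al = (\<lambda>i. c / real N * (p1 i / (2 * \<tau>) + c * p1 i * pt / (2 * real N) + pit i / 2))"
  define be where "be = (\<lambda>i. c / real N * (p1 i / (2 * \<tau>) + c * pt * p1 i / (2 * real N) + pti i / 2))"
  define ga where "ga = c * pt / (2 * real N)"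
  define mu where "mu = c / (2 * real N) * (pt * (2 + 2 * c * \<tau> * pt / real N) + 2 * pt + 2 * \<tau> * ptt)"
  define L where "L = (\<lambda>k l. p2 k l - (if k = l then 1 / (2 * \<tau>) else 0))"
  define D where "D = (\<lambda>k l. (c / 2 - 1) * p2 k l + c^2 / (2 * real N) * p1 k * p1 l)"
  define LD where "LD = (\<lambda>k l. (p2 k l - (if k = l then 1 / (2 * \<tau>) else 0)) + ((c / 2 - 1) * p2 k l + c^2 / (2 * real N) * p1 k * p1 l))"
  define T where "T = (\<Sum>i<n+N. Q i i)"
  have LDe: "\<And>k l. LD k l = L k l + D k l" unfolding LD_def L_def D_def by simp
  have dec1: "(\<Sum>k<n+N. \<Sum>l<n+N. (Q k l)^2) = (\<Sum>i<n. \<Sum>i'<n. (LD i i')^2)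
           + (\<Sum>i<n. (al i)^2) * (2 * real N * \<tau>) + (\<Sum>i<n. (be i)^2) * (2 * real N * \<tau>)
           + (real N * ga^2 + 2 * ga * mu + mu^2)"
    using Q_decomp(1) unfolding al_def be_def ga_def mu_def LD_def by simp
  have dec2: "(\<Sum>i<n+N. Q i i) = (\<Sum>i<n. LD i i) + real N * ga + mu"
    using Q_decomp(2) unfolding ga_def mu_def LD_def by simp
  have m: "n + N > 0" using N3 by simp
  have X: "(\<Sum>k<n+N. \<Sum>l<n+N. (Q k l - (if k = l then T / real (n+N) else 0))^2)
     = (\<Sum>k<n+N. \<Sum>l<n+N. (Q k l)^2) - T^2 / real (n+N)"
    unfolding T_def by (rule sum_split_sq[OF m])
  define SL where "SL = (\<Sum>i<n. \<Sum>j<n. (L i j)^2)"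
  have rN: "2 * real N * \<tau> \<le> 2 * real N * W" using tW Npos by simp
  have Wp: "\<And>k. W^k \<ge> 0" using W0 by simp
  have Lb: "\<And>k l. k < n \<Longrightarrow> l < n \<Longrightarrow> \<bar>L k l\<bar> \<le> 2 * W"
  proof -
    fix k l assume kl: "k < n" "l < n"
    have i: "\<bar>1 / (2 * \<tau>)\<bar> \<le> W" using inv_tau tpos W0 by simp
    show "\<bar>L k l\<bar> \<le> 2 * W" unfolding L_def using bp2[OF kl] i by (smt (verit))
  qed
  have Db: "\<And>k l. k < n \<Longrightarrow> l < n \<Longrightarrow> \<bar>D k l\<bar> \<le> 7 * W^2 / real N"
    unfolding D_def by (rule B_D)
  have Db3: "\<And>k l. k < n \<Longrightarrow> l < n \<Longrightarrow> \<bar>D k l\<bar> \<le> 3 * W^2"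
  proof -
    fix k l assume kl: "k < n" "l < n"
    have "7 * W^2 / real N \<le> 7 * W^2 / 3" using N3 Wp[of 2] by (intro divide_left_mono) auto
    then show "\<bar>D k l\<bar> \<le> 3 * W^2" using Db[OF kl] Wp[of 2] by linarith
  qed
  have ent: "\<And>k l. k < n \<Longrightarrow> l < n \<Longrightarrow> \<bar>(LD k l)^2 - (L k l)^2\<bar> \<le> 49 * W^4 / real N"
  proof -
    fix k l assume kl: "k < n" "l < n"
    have e: "(LD k l)^2 - (L k l)^2 = D k l * (2 * L k l + D k l)" unfolding LDe by (simp add: power2_eq_square algebra_simps)
    have "\<bar>2 * L k l + D k l\<bar> \<le> 7 * W^2" using Lb[OF kl] Db3[OF kl] W2 by (smt (verit))
    then have "\<bar>D k l * (2 * L k l + D k l)\<bar> \<le> 7 * W^2 / real N * (7 * W^2)" by (rule abs_mult_le[OF Db[OF kl]])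
    also have "\<dots> = 49 * W^4 / real N" by (simp add: power2_eq_square power4_eq_xxxx)
    finally show "\<bar>(LD k l)^2 - (L k l)^2\<bar> \<le> 49 * W^4 / real N" unfolding e .
  qed
  have a: "\<bar>(\<Sum>i<n. \<Sum>i'<n. (LD i i')^2) - SL\<bar> \<le> 49 * W^6 / real N"
  proof -
    have "(\<Sum>i<n. \<Sum>i'<n. (LD i i')^2) - SL = (\<Sum>i<n. \<Sum>i'<n. (LD i i')^2 - (L i i')^2)"
      unfolding SL_def by (simp add: sum_subtractf)
    also have "\<bar>\<dots>\<bar> \<le> real n * (real n * (49 * W^4 / real N))"
      by (intro sum_abs_le) (use ent in auto)
    also have "\<dots> \<le> W * (W * (49 * W^4 / real N))"
      using nW Npos Wp[of 4] by (intro mult_mono) auto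
    also have "\<dots> = 49 * W^6 / real N" by (simp add: eval_nat_numeral)
    finally show ?thesis .
  qed
  have ab: "\<And>i. i < n \<Longrightarrow> (al i)^2 \<le> (5 * W^2 / real N)^2"
    unfolding al_def using B_alpha(1) bpit by (intro sq_le) auto
  have bb: "\<And>i. i < n \<Longrightarrow> (be i)^2 \<le> (5 * W^2 / real N)^2"
    unfolding be_def using B_alpha(2) bpti by (intro sq_le) auto
  have b1: "(\<Sum>i<n. (al i)^2) * (2 * real N * \<tau>) \<le> 50 * W^6 / real N"
    and b2: "(\<Sum>i<n. (be i)^2) * (2 * real N * \<tau>) \<le> 50 * W^6 / real N"
  proof -
    have key: "\<And>g. (\<And>i. i < n \<Longrightarrow> g i \<le> (5 * W^2 / real N)^2) \<Longrightarrow> (\<Sum>i<n. g i) * (2 * real N * \<tau>) \<le> 50 * W^6 / real N"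
    proof -
      fix g assume h: "\<And>i. i < n \<Longrightarrow> g i \<le> (5 * W^2 / real N)^2"
      have s: "(\<Sum>i<n. g i) \<le> real n * (5 * W^2 / real N)^2"
        using sum_mono[of "{..<n}" g "\<lambda>_. (5 * W^2 / real N)^2"] h by simp
      have "(\<Sum>i<n. g i) * (2 * real N * \<tau>) \<le> (real n * (5 * W^2 / real N)^2) * (2 * real N * W)"
        using s rN tpos Npos by (intro mult_mono) auto
      also have "\<dots> \<le> (W * (5 * W^2 / real N)^2) * (2 * real N * W)"
        using nW Npos W0 by (intro mult_right_mono mult_right_mono) auto
      also have "\<dots> = 50 * W^6 / real N" using Npos by (simp add: eval_nat_numeral field_simps)
      finally show "(\<Sum>i<n. g i) * (2 * real N * \<tau>) \<le> 50 * W^6 / real N" .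
    qed
    show "(\<Sum>i<n. (al i)^2) * (2 * real N * \<tau>) \<le> 50 * W^6 / real N" by (rule key) (rule ab)
    show "(\<Sum>i<n. (be i)^2) * (2 * real N * \<tau>) \<le> 50 * W^6 / real N" by (rule key) (rule bb)
  qed
  have b1': "(\<Sum>i<n. (al i)^2) * (2 * real N * \<tau>) \<ge> 0" and b2': "(\<Sum>i<n. (be i)^2) * (2 * real N * \<tau>) \<ge> 0"
    using tpos by (auto intro!: mult_nonneg_nonneg sum_nonneg)
  have gb: "\<bar>ga\<bar> \<le> 2 * W / real N" unfolding ga_def by (rule B_gam)
  have mb: "\<bar>mu\<bar> \<le> 12 * W^3 / real N" unfolding mu_def by (rule B_mu)
  have c: "\<bar>real N * ga^2 + 2 * ga * mu + mu^2\<bar> \<le> 68 * W^6 / real N"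
  proof -
    have c1: "real N * ga^2 \<le> 4 * W^6 / real N"
    proof -
      have "real N * ga^2 \<le> real N * (2 * W / real N)^2" using sq_le[OF gb] Npos by simp
      also have "\<dots> = 4 * W^2 / real N" using Npos by (simp add: field_simps power2_eq_square)
      also have "\<dots> \<le> 4 * W^6 / real N" using Wmono[of 2 6] Npos by (simp add: divide_right_mono)
      finally show ?thesis .
    qed
    have c2: "\<bar>2 * ga * mu\<bar> \<le> 16 * W^6 / real N"
    proof -
      have "\<bar>2 * ga * mu\<bar> \<le> 2 * (2 * W / real N) * (12 * W^3 / real N)"
        using abs_mult_le[OF gb mb] by (simp add: abs_mult)
      also have "\<dots> = 48 * W^4 / (real N)^2" by (simp add: eval_nat_numeral field_simps)
      also have "\<dots> \<le> 48 * W^4 / (3 * real N)" by (rule invN2) (use Wp in simp)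
      also have "\<dots> \<le> 16 * W^6 / real N" using Wmono[of 4 6] Npos by (simp add: divide_simps)
      finally show ?thesis .
    qed
    have c3: "mu^2 \<le> 48 * W^6 / real N"
    proof -
      have "mu^2 \<le> (12 * W^3 / real N)^2" by (rule sq_le[OF mb])
      also have "\<dots> = 144 * W^6 / (real N)^2" by (simp add: eval_nat_numeral field_simps)
      also have "\<dots> \<le> 144 * W^6 / (3 * real N)" by (rule invN2) (use Wp in simp)
      finally show ?thesis by simp
    qed
    have p: "real N * ga^2 \<ge> 0" "mu^2 \<ge> 0" by simp_all
    have r: "\<And>K. K * W^6 / real N = K * (W^6 / real N)" by simp
    show ?thesis using c1 c2 c3 p unfolding r abs_le_iff by linarith
  qed
  have d: "T^2 / real (n+N) \<le> 121 * W^6 / real N"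
  proof -
    have Te: "T = (\<Sum>i<n. LD i i) + real N * ga + mu" unfolding T_def by (rule dec2)
    have LDb: "\<bar>LD i i\<bar> \<le> 5 * W^2" if i: "i < n" for i
      using Lb[OF i i] Db3[OF i i] W2 unfolding LDe by (smt (verit))
    have t1: "\<bar>\<Sum>i<n. LD i i\<bar> \<le> real n * (5 * W^2)" by (rule sum_abs_le) (rule LDb)
    also have "\<dots> \<le> W * (5 * W^2)" using nW Wp[of 2] by (intro mult_right_mono) auto
    also have "\<dots> = 5 * W^3" by (simp add: power2_eq_square power3_eq_cube)
    finally have t1: "\<bar>\<Sum>i<n. LD i i\<bar> \<le> 5 * W^3" .
    have t2: "\<bar>real N * ga\<bar> \<le> 2 * W" using gb Npos by (simp add: abs_mult field_simps)
    have t3: "\<bar>mu\<bar> \<le> 4 * W^3"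
    proof -
      have "12 * W^3 / real N \<le> 12 * W^3 / 3" using N3 Wp[of 3] by (intro divide_left_mono) auto
      then show ?thesis using mb by simp
    qed
    have Tb: "\<bar>T\<bar> \<le> 11 * W^3" unfolding Te using t1 t2 t3 W13 by (smt (verit))
    have "T^2 \<le> (11 * W^3)^2" by (rule sq_le[OF Tb])
    also have "\<dots> = 121 * W^6" by (simp add: eval_nat_numeral)
    finally have "T^2 / real (n+N) \<le> 121 * W^6 / real (n+N)" by (simp add: divide_right_mono)
    also have "\<dots> \<le> 121 * W^6 / real N" using Npos Wp[of 6] by (intro divide_left_mono) auto
    finally show ?thesis .
  qed
  have "(\<Sum>k<n+N. \<Sum>l<n+N. (Q k l - (if k = l then T / real (n+N) else 0))^2) - SL
     = ((\<Sum>i<n. \<Sum>i'<n. (LD i i')^2) - SL) + (\<Sum>i<n. (al i)^2) * (2 * real N * \<tau>) + (\<Sum>i<n. (be i)^2) * (2 * real N * \<tau>)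
       + (real N * ga^2 + 2 * ga * mu + mu^2) - T^2 / real (n+N)"
    unfolding X dec1 by simp
  moreover have "T^2 / real (n+N) \<ge> 0" by simp
  ultimately have "\<bar>(\<Sum>k<n+N. \<Sum>l<n+N. (Q k l - (if k = l then T / real (n+N) else 0))^2) - SL\<bar> \<le> 340 * W^6 / real N"
  proof -
    assume e: "(\<Sum>k<n+N. \<Sum>l<n+N. (Q k l - (if k = l then T / real (n+N) else 0))^2) - SL
     = ((\<Sum>i<n. \<Sum>i'<n. (LD i i')^2) - SL) + (\<Sum>i<n. (al i)^2) * (2 * real N * \<tau>) + (\<Sum>i<n. (be i)^2) * (2 * real N * \<tau>)
       + (real N * ga^2 + 2 * ga * mu + mu^2) - T^2 / real (n+N)" and tp: "T^2 / real (n+N) \<ge> 0"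
    have r: "\<And>K. K * W^6 / real N = K * (W^6 / real N)" by simp
    show ?thesis unfolding e using a b1 b2 b1' b2' c d tp unfolding r abs_le_iff by linarith
  qed
  also have "\<dots> \<le> 400 * W^6 / real N" using Npos Wp[of 6] by (simp add: divide_right_mono)
  finally show ?thesis unfolding T_def SL_def L_def .
qed
end
end

lemma alg_xx: "N > 0 \<Longrightarrow> \<tau> > 0 \<Longrightarrow>
  (2 * N * \<tau>) * E * a * u * (a * v) + (2 * N * \<tau>) * E * (a * w)
  = 2 * ((2 * N * \<tau>) * E) / N * (((w - d) + ((N * a / 2 - 1) * w + (N * a)^2 / (2 * N) * u * v)) + d)"
  for N \<tau> E a u v w d :: real
  by (simp add: field_simps power2_eq_square)

lemma alg_yx: "N > 0 \<Longrightarrow> \<tau> > 0 \<Longrightarrow>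
  2 * yj * E * (a * u) + (2 * N * \<tau>) * E * a * (pt * (yj / N)) * (a * u) + (2 * N * \<tau>) * E * (a * (q * (yj / N)))
  = 2 * ((2 * N * \<tau>) * E) / N * (yj * ((N * a) / N * (u / (2 * \<tau>) + (N * a) * pt * u / (2 * N) + q / 2)) + 0)"
  for N \<tau> E a u yj pt q :: real
  by (simp add: field_simps power2_eq_square)

lemma alg_xy: "N > 0 \<Longrightarrow> \<tau> > 0 \<Longrightarrow>
  yj * E * a * u * (2 + a * (2 * N * \<tau>) * pt / N) + yj * E * (a * ((2 * N * \<tau>) * q) / N)
  = 2 * ((2 * N * \<tau>) * E) / N * (yj * ((N * a) / N * (u / (2 * \<tau>) + (N * a) * u * pt / (2 * N) + q / 2)) + 0)"
  for N \<tau> E a u yj pt q :: real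
  by (simp add: field_simps power2_eq_square)

lemma alg_yy: "N > 0 \<Longrightarrow> \<tau> > 0 \<Longrightarrow>
  d * E * (2 + a * (2 * N * \<tau>) * pt / N)
     + yj * E * a * (pt * (yk / N)) * (2 + a * (2 * N * \<tau>) * pt / N)
     + yj * E * (a * (2 * yk * pt + (2 * N * \<tau>) * (ptt * (yk / N))) / N)
  = 2 * ((2 * N * \<tau>) * E) / N * ((d * ((N * a) * pt / (2 * N))
         + yk * yj * ((N * a) / (2 * N) * (pt * (2 + 2 * (N * a) * \<tau> * pt / N) + 2 * pt + 2 * \<tau> * ptt)) / (2 * N * \<tau>)) + d * (1 / (2 * \<tau>)))"
  for N \<tau> E a yj yk pt ptt d :: real
  by (simp add: field_simps power2_eq_square)

theorem lemma3p2:
  fixes n :: nat and u f :: "(nat \<Rightarrow> real) \<Rightarrow> real \<Rightarrow> real" and \<tau>1 \<tau>2 :: real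
  assumes n_pos: "n \<ge> 1"
    and tau: "0 < \<tau>1" "\<tau>1 < \<tau>2"
    and smooth: "all_partials_exist n f"
    and u_def: "\<And>x t. x \<in> Rvec n \<Longrightarrow> t > 0 \<Longrightarrow> u x t = t powr (- real n / 2) * exp (- f x t)"
    and u_pos: "\<And>x t. x \<in> Rvec n \<Longrightarrow> t > 0 \<Longrightarrow> u x t > 0"
    and heat: "\<And>x t. x \<in> Rvec n \<Longrightarrow> t > 0 \<Longrightarrow> pdt u x t = (\<Sum>i<n. pdx i (pdx i u) x t)"
    and bounded: "\<And>ds. list_all (dir_ok n) ds \<Longrightarrow>
                    \<exists>C. \<forall>x\<in>Rvec n. \<forall>t\<in>{\<tau>1..\<tau>2}. \<bar>pd ds f x t\<bar> \<le> C"
  shows "\<exists>C. \<forall>N::nat. \<forall>z \<in> Rvec (n + N).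
           N \<ge> 3 \<longrightarrow> (rad n N z)^2 / (2 * real N) \<in> {\<tau>1..\<tau>2} \<longrightarrow>
           (let \<tau> = (rad n N z)^2 / (2 * real N); x = xpart n z; b = bfun n N f z in
             (\<forall>k<n+N. \<forall>l<n+N.
                \<bar>real N / (2 * b^2) * hessz (\<lambda>w. (bfun n N f w)^2) z k l - M0 n f x \<tau> k l\<bar>
                  \<le> (if (k < n) = (l < n) then C / real N else C / sqrt (real N)))
             \<and> \<bar>Bnorm2 n N f z
                 - 4 * b^4 / (real N)^2 *
                     (\<Sum>i<n. \<Sum>j<n. (pdx i (pdx j f) x \<tau> - (if i = j then 1 / (2 * \<tau>) else 0))^2)\<bar>
                 \<le> 4 * b^4 / (real N)^2 * (C / real N))"
proof -
  define Dn where "Dn = insert DT (DX ` {..<n})"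
  define S where "S = (\<lambda>d. [d]) ` Dn \<union> (\<lambda>(d, e). [d, e]) ` (Dn \<times> Dn)"
  have finS: "finite S" unfolding S_def Dn_def by simp
  have okS: "\<forall>ds\<in>S. list_all (dir_ok n) ds" unfolding S_def Dn_def by (auto simp: dir_ok_def)
  have "\<forall>ds\<in>S. \<exists>C. \<forall>x\<in>Rvec n. \<forall>t\<in>{\<tau>1..\<tau>2}. \<bar>pd ds f x t\<bar> \<le> C"
    using bounded okS by blast
  then obtain Cf where Cf: "\<forall>ds\<in>S. \<forall>x\<in>Rvec n. \<forall>t\<in>{\<tau>1..\<tau>2}. \<bar>pd ds f x t\<bar> \<le> Cf ds"
    by (metis bchoice)
  define K where "K = (\<Sum>ds\<in>S. \<bar>Cf ds\<bar>)"
  have K: "\<And>ds x t. ds \<in> S \<Longrightarrow> x \<in> Rvec n \<Longrightarrow> t \<in> {\<tau>1..\<tau>2} \<Longrightarrow> \<bar>pd ds f x t\<bar> \<le> K"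
  proof -
    fix ds x t assume h: "ds \<in> S" "x \<in> Rvec n" "t \<in> {\<tau>1..\<tau>2}"
    have "\<bar>Cf ds\<bar> \<le> K" unfolding K_def by (rule member_le_sum[OF h(1)]) (auto simp: finS)
    then show "\<bar>pd ds f x t\<bar> \<le> K" using Cf h by fastforce
  qed
  define W where "W = \<bar>K\<bar> + 1 + 1 / \<tau>1 + \<tau>2 + real n"
  have i1: "0 < 1 / \<tau>1" using tau by simp
  have W1: "W \<ge> 1" using tau i1 unfolding W_def by simp
  have WK: "K \<le> W" "1 / \<tau>1 \<le> W" "\<tau>2 \<le> W" "real n \<le> W" using tau i1 abs_ge_self[of K] unfolding W_def by linarith+
  show ?thesis
  proof (rule exI[of _ "400 * W^6"], intro allI ballI impI)
    fix N :: nat and z assume z: "z \<in> Rvec (n + N)" and N3: "N \<ge> 3"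
      and tin: "(rad n N z)^2 / (2 * real N) \<in> {\<tau>1..\<tau>2}"
    define \<tau> where "\<tau> = rho n N z / (2 * real N)"
    have Npos: "N > 0" and NposR: "real N > 0" using N3 by auto
    have tau_eq: "(rad n N z)^2 / (2 * real N) = \<tau>" by (simp add: rad_sq \<tau>_def)
    have tin': "\<tau> \<in> {\<tau>1..\<tau>2}" using tin tau_eq by simp
    have tpos: "\<tau> > 0" using tin' tau by simp
    have rhoeq: "rho n N z = 2 * real N * \<tau>" using NposR by (simp add: \<tau>_def)
    have rhopos: "rho n N z > 0" using rhoeq tpos NposR by simp
    define a where "a = 2 / (real (n + N) - 2)"
    define c where "c = real N * a"
    have cdef: "c = 2 * real N / (real (n + N) - 2)" unfolding c_def a_def by simp
    define G where "G = rho n N z * exp (a * phi n N f [] z)"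
    have Gpos: "G > 0" unfolding G_def using rhopos by simp
    have bsqG: "(bfun n N f z)^2 = G" unfolding G_def a_def using bsq[of n N f z] N3 by (simp add: Gf_phi)
    have hz: "hessz (\<lambda>w. (bfun n N f w)^2) = hessz (Gf n N f)"
      using bsq[of n N f] N3 by (simp add: fun_eq_iff)
    define Q where "Q = (\<lambda>k l. (if k < n \<and> l < n then (phi n N f [DX k, DX l] z - (if k = l then 1 / (2 * \<tau>) else 0)) + ((c / 2 - 1) * phi n N f [DX k, DX l] z + c^2 / (2 * real N) * phi n N f [DX k] z * phi n N f [DX l] z)
      else if k < n then z (n + (l - n)) * (c / real N * (phi n N f [DX k] z / (2 * \<tau>) + c * phi n N f [DX k] z * phi n N f [DT] z / (2 * real N) + phi n N f [DX k, DT] z / 2))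
      else if l < n then z (n + (k - n)) * (c / real N * (phi n N f [DX l] z / (2 * \<tau>) + c * phi n N f [DT] z * phi n N f [DX l] z / (2 * real N) + phi n N f [DT, DX l] z / 2))
      else (if k = l then c * phi n N f [DT] z / (2 * real N) else 0)
         + z (n + (k - n)) * z (n + (l - n)) * (c / (2 * real N) * (phi n N f [DT] z * (2 + 2 * c * \<tau> * phi n N f [DT] z / real N) + 2 * phi n N f [DT] z + 2 * \<tau> * phi n N f [DT, DT] z)) / (2 * real N * \<tau>)))"
    have HQ: "hessz (Gf n N f) z k l = 2 * G / real N * (Q k l + (if k = l then 1 / (2 * \<tau>) else 0))"
      if kl: "k < n + N" "l < n + N" for k l
    proof (cases "k < n")
      case kx: True
      show ?thesis
      proof (cases "l < n")
        case lx: True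
        have "hessz (Gf n N f) z k l = (2 * real N * \<tau>) * exp (a * phi n N f [] z) * a * phi n N f [DX k] z * (a * phi n N f [DX l] z)
             + (2 * real N * \<tau>) * exp (a * phi n N f [] z) * (a * phi n N f [DX k, DX l] z)"
          using H1[OF smooth Npos a_def kx lx rhopos] unfolding rhoeq .
        also have "\<dots> = 2 * ((2 * real N * \<tau>) * exp (a * phi n N f [] z)) / real N * (((phi n N f [DX k, DX l] z - (if k = l then 1 / (2 * \<tau>) else 0))
             + ((real N * a / 2 - 1) * phi n N f [DX k, DX l] z + (real N * a)^2 / (2 * real N) * phi n N f [DX k] z * phi n N f [DX l] z)) + (if k = l then 1 / (2 * \<tau>) else 0))"
          by (rule alg_xx[OF NposR tpos])
        also have "\<dots> = 2 * G / real N * (Q k l + (if k = l then 1 / (2 * \<tau>) else 0))"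
          using kx lx by (simp add: Q_def G_def rhoeq c_def)
        finally show ?thesis .
      next
        case ly: False
        then obtain j where j: "l = n + j" "j < N" using kl by (metis add_diff_inverse_nat nat_add_left_cancel_less)
        have "hessz (Gf n N f) z k (n + j) = z (n+j) * exp (a * phi n N f [] z) * a * phi n N f [DX k] z * (2 + a * (2 * real N * \<tau>) * phi n N f [DT] z / real N)
             + z (n+j) * exp (a * phi n N f [] z) * (a * ((2 * real N * \<tau>) * phi n N f [DX k, DT] z) / real N)"
          using H3[OF smooth Npos a_def kx j(2) rhopos] unfolding rhoeq .
        also have "\<dots> = 2 * ((2 * real N * \<tau>) * exp (a * phi n N f [] z)) / real N * (z (n+j) * ((real N * a) / real N * (phi n N f [DX k] z / (2 * \<tau>) + (real N * a) * phi n N f [DX k] z * phi n N f [DT] z / (2 * real N) + phi n N f [DX k, DT] z / 2)) + 0)"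
          by (rule alg_xy[OF NposR tpos])
        also have "\<dots> = 2 * G / real N * (Q k (n + j) + (if k = n + j then 1 / (2 * \<tau>) else 0))"
          using kx by (simp add: Q_def G_def rhoeq c_def)
        finally show ?thesis using j by simp
      qed
    next
      case ky: False
      then obtain j where j: "k = n + j" "j < N" using kl by (metis add_diff_inverse_nat nat_add_left_cancel_less)
      show ?thesis
      proof (cases "l < n")
        case lx: True
        have "hessz (Gf n N f) z (n + j) l = 2 * z (n+j) * exp (a * phi n N f [] z) * (a * phi n N f [DX l] z)
             + (2 * real N * \<tau>) * exp (a * phi n N f [] z) * a * (phi n N f [DT] z * (z (n+j) / real N)) * (a * phi n N f [DX l] z)
             + (2 * real N * \<tau>) * exp (a * phi n N f [] z) * (a * (phi n N f [DT, DX l] z * (z (n+j) / real N)))"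
          using H2[OF smooth Npos a_def j(2) lx rhopos] unfolding rhoeq .
        also have "\<dots> = 2 * ((2 * real N * \<tau>) * exp (a * phi n N f [] z)) / real N * (z (n+j) * ((real N * a) / real N * (phi n N f [DX l] z / (2 * \<tau>) + (real N * a) * phi n N f [DT] z * phi n N f [DX l] z / (2 * real N) + phi n N f [DT, DX l] z / 2)) + 0)"
          by (rule alg_yx[OF NposR tpos])
        also have "\<dots> = 2 * G / real N * (Q (n + j) l + (if n + j = l then 1 / (2 * \<tau>) else 0))"
          using lx by (simp add: Q_def G_def rhoeq c_def)
        finally show ?thesis using j by simp
      next
        case ly: False
        then obtain i where i: "l = n + i" "i < N" using kl by (metis add_diff_inverse_nat nat_add_left_cancel_less)
        have "hessz (Gf n N f) z (n + j) (n + i) = (if j = i then 1 else 0) * exp (a * phi n N f [] z) * (2 + a * (2 * real N * \<tau>) * phi n N f [DT] z / real N)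
             + z (n+i) * exp (a * phi n N f [] z) * a * (phi n N f [DT] z * (z (n+j) / real N)) * (2 + a * (2 * real N * \<tau>) * phi n N f [DT] z / real N)
             + z (n+i) * exp (a * phi n N f [] z) * (a * (2 * z (n+j) * phi n N f [DT] z + (2 * real N * \<tau>) * (phi n N f [DT, DT] z * (z (n+j) / real N))) / real N)"
          using H4[OF smooth Npos a_def j(2) i(2) rhopos] unfolding rhoeq .
        also have "\<dots> = 2 * ((2 * real N * \<tau>) * exp (a * phi n N f [] z)) / real N * (((if j = i then 1 else 0) * ((real N * a) * phi n N f [DT] z / (2 * real N))
             + z (n+j) * z (n+i) * ((real N * a) / (2 * real N) * (phi n N f [DT] z * (2 + 2 * (real N * a) * \<tau> * phi n N f [DT] z / real N) + 2 * phi n N f [DT] z + 2 * \<tau> * phi n N f [DT, DT] z)) / (2 * real N * \<tau>))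
             + (if j = i then 1 else 0) * (1 / (2 * \<tau>)))"
          by (rule alg_yy[OF NposR tpos])
        also have "\<dots> = 2 * G / real N * (Q (n + j) (n + i) + (if n + j = n + i then 1 / (2 * \<tau>) else 0))"
          by (simp add: Q_def G_def rhoeq c_def)
        finally show ?thesis using i j by simp
      qed
    qed
    have phi_eq: "\<And>ds. phi n N f ds z = pd ds f (xpart n z) \<tau>" by (simp add: phi_def \<tau>_def)
    have pb: "\<And>ds. ds \<in> S \<Longrightarrow> \<bar>phi n N f ds z\<bar> \<le> W"
      using K xpart_Rvec tin' WK(1) unfolding phi_eq by (meson order_trans)
    have inS: "\<And>i. i < n \<Longrightarrow> [DX i] \<in> S" "[DT] \<in> S" "[DT, DT] \<in> S"
      "\<And>i. i < n \<Longrightarrow> [DT, DX i] \<in> S" "\<And>i. i < n \<Longrightarrow> [DX i, DT] \<in> S"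
      "\<And>i j. i < n \<Longrightarrow> j < n \<Longrightarrow> [DX i, DX j] \<in> S"
      unfolding S_def Dn_def by force+
    have tinv: "1 / \<tau> \<le> W"
    proof -
      have "1 / \<tau> \<le> 1 / \<tau>1" using tin' tau by (simp add: divide_left_mono frac_le)
      then show ?thesis using WK(2) by simp
    qed
    have tW: "\<tau> \<le> W" using tin' WK(3) by simp
    have rhoy: "(\<Sum>j<N. ((\<lambda>j. z (n + j)) j)^2) = 2 * real N * \<tau>" using rhoeq by (simp add: rho_def)
    have Qdef: "\<And>k l. Q k l = (if k < n \<and> l < n then ((\<lambda>k l. phi n N f [DX k, DX l] z) k l - (if k = l then 1 / (2 * \<tau>) else 0)) + ((c / 2 - 1) * (\<lambda>k l. phi n N f [DX k, DX l] z) k l + c^2 / (2 * real N) * (\<lambda>i. phi n N f [DX i] z) k * (\<lambda>i. phi n N f [DX i] z) l)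
      else if k < n then (\<lambda>j. z (n + j)) (l - n) * (c / real N * ((\<lambda>i. phi n N f [DX i] z) k / (2 * \<tau>) + c * (\<lambda>i. phi n N f [DX i] z) k * phi n N f [DT] z / (2 * real N) + (\<lambda>i. phi n N f [DX i, DT] z) k / 2))
      else if l < n then (\<lambda>j. z (n + j)) (k - n) * (c / real N * ((\<lambda>i. phi n N f [DX i] z) l / (2 * \<tau>) + c * phi n N f [DT] z * (\<lambda>i. phi n N f [DX i] z) l / (2 * real N) + (\<lambda>i. phi n N f [DT, DX i] z) l / 2))
      else (if k = l then c * phi n N f [DT] z / (2 * real N) else 0)
         + (\<lambda>j. z (n + j)) (k - n) * (\<lambda>j. z (n + j)) (l - n) * (c / (2 * real N) * (phi n N f [DT] z * (2 + 2 * c * \<tau> * phi n N f [DT] z / real N) + 2 * phi n N f [DT] z + 2 * \<tau> * phi n N f [DT, DT] z)) / (2 * real N * \<tau>))"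
      unfolding Q_def by simp
    have bp1: "\<And>i. i < n \<Longrightarrow> \<bar>(\<lambda>i. phi n N f [DX i] z) i\<bar> \<le> W" using pb inS(1) by simp
    have bp2: "\<And>i k. i < n \<Longrightarrow> k < n \<Longrightarrow> \<bar>(\<lambda>k l. phi n N f [DX k, DX l] z) i k\<bar> \<le> W" using pb inS(6) by simp
    have bpt: "\<bar>phi n N f [DT] z\<bar> \<le> W" using pb inS(2) by simp
    have bptt: "\<bar>phi n N f [DT, DT] z\<bar> \<le> W" using pb inS(3) by simp
    have bpti: "\<And>i. i < n \<Longrightarrow> \<bar>(\<lambda>i. phi n N f [DT, DX i] z) i\<bar> \<le> W" using pb inS(4) by simp
    have bpit: "\<And>i. i < n \<Longrightarrow> \<bar>(\<lambda>i. phi n N f [DX i, DT] z) i\<bar> \<le> W" using pb inS(5) by simp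
    have tr1: "\<And>i. i < n \<Longrightarrow> i < n" and tr2: "\<And>i k. i < n \<Longrightarrow> k < n \<Longrightarrow> i < n"
      and tr3: "\<And>i k. i < n \<Longrightarrow> k < n \<Longrightarrow> k < n" by auto
    note QE = Q_entry[OF n_pos N3 cdef tpos tinv tW W1 WK(4) bp1 bp2 bpt bptt bpti bpit rhoy Qdef]
    note QN = Q_norm[OF n_pos N3 cdef tpos tinv tW W1 WK(4) bp1 bp2 bpt bptt bpti bpit rhoy Qdef]
    have W3: "14 * W^3 \<le> 400 * W^6" "10 * W^3 \<le> 400 * W^6"
    proof -
      have "W^3 \<le> W^6" using W1 by (intro power_increasing) auto
      moreover have "W^3 \<ge> 0" using W1 by simp
      ultimately show "14 * W^3 \<le> 400 * W^6" "10 * W^3 \<le> 400 * W^6" by linarith+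
    qed
    have entries: "\<bar>real N / (2 * G) * hessz (\<lambda>w. (bfun n N f w)^2) z k l - M0 n f (xpart n z) \<tau> k l\<bar>
        \<le> (if (k < n) = (l < n) then 400 * W^6 / real N else 400 * W^6 / sqrt (real N))"
      if kl: "k < n + N" "l < n + N" for k l
    proof -
      have e1: "real N / (2 * G) * hessz (\<lambda>w. (bfun n N f w)^2) z k l = Q k l + (if k = l then 1 / (2 * \<tau>) else 0)"
        unfolding hz HQ[OF kl] using Gpos NposR by (simp add: field_simps)
      have e2: "M0 n f (xpart n z) \<tau> k l = (if k < n \<and> l < n then phi n N f [DX k, DX l] z else if n \<le> k \<and> n \<le> l then (if k = l then 1 / (2 * \<tau>) else 0) else 0)"
        unfolding M0_def phi_eq by simp
      have "\<bar>real N / (2 * G) * hessz (\<lambda>w. (bfun n N f w)^2) z k l - M0 n f (xpart n z) \<tau> k l\<bar>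
        \<le> (if (k < n) = (l < n) then 14 * W^3 / real N else 10 * W^3 / sqrt (real N))"
        unfolding e1 e2 using QE[OF tr1 tr2 tr3 tr1 tr1 kl] by simp
      also have "\<dots> \<le> (if (k < n) = (l < n) then 400 * W^6 / real N else 400 * W^6 / sqrt (real N))"
        using W3 NposR by (auto intro!: divide_right_mono)
      finally show ?thesis .
    qed
    define T where "T = (\<Sum>i<n+N. Q i i)"
    have mpos: "real (n + N) > 0" using NposR by simp
    have lap: "lapz (n + N) (\<lambda>w. (bfun n N f w)^2) z = 2 * G / real N * (T + real (n + N) / (2 * \<tau>))"
    proof -
      have "lapz (n + N) (\<lambda>w. (bfun n N f w)^2) z = (\<Sum>k<n+N. 2 * G / real N * (Q k k + 1 / (2 * \<tau>)))"
        unfolding lapz_def hz by (intro sum.cong refl) (simp add: HQ)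
      also have "\<dots> = 2 * G / real N * (T + real (n + N) / (2 * \<tau>))"
        unfolding sum_distrib_left[symmetric] sum.distrib T_def by simp
      finally show ?thesis .
    qed
    have Bm: "Bmat n N f z k l = 2 * G / real N * (Q k l - (if k = l then T / real (n + N) else 0))"
      if kl: "k < n + N" "l < n + N" for k l
    proof -
      have nz: "real N \<noteq> 0" "real n + real N \<noteq> 0" "\<tau> \<noteq> 0" using NposR tpos by auto
      have d: "(T + real (n + N) / (2 * \<tau>)) / real (n + N) = T / real (n + N) + 1 / (2 * \<tau>)"
      proof -
        have "real (n + N) / (2 * \<tau>) / real (n + N) = 1 / (2 * \<tau>)" using mpos by simp
        then show ?thesis by (simp only: add_divide_distrib)
      qed
      have lm: "lapz (n + N) (\<lambda>w. (bfun n N f w)^2) z / real (n + N) = 2 * G / real N * (T / real (n + N) + 1 / (2 * \<tau>))"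
        unfolding lap d[symmetric] by simp
      show ?thesis unfolding Bmat_def lm hz HQ[OF kl]
        by (cases "k = l") (simp_all add: algebra_simps)
    qed
    have Bn: "Bnorm2 n N f z = (2 * G / real N)^2 * (\<Sum>k<n+N. \<Sum>l<n+N. (Q k l - (if k = l then T / real (n + N) else 0))^2)"
      unfolding Bnorm2_def sum_distrib_left
      by (intro sum.cong refl) (simp only: Bm lessThan_iff power_mult_distrib)
    have SLeq: "(\<Sum>i<n. \<Sum>j<n. (pdx i (pdx j f) (xpart n z) \<tau> - (if i = j then 1 / (2 * \<tau>) else 0))^2)
       = (\<Sum>i<n. \<Sum>j<n. ((\<lambda>k l. phi n N f [DX k, DX l] z) i j - (if i = j then 1 / (2 * \<tau>) else 0))^2)"
      by (simp add: phi_eq)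
    have b4: "(bfun n N f z)^4 = G^2" using bsqG by (metis power_mult numeral_Bit0 numeral_One mult_2 power2_eq_square one_add_one)
    have normb: "\<bar>Bnorm2 n N f z - 4 * G^2 / (real N)^2 *
          (\<Sum>i<n. \<Sum>j<n. (pdx i (pdx j f) (xpart n z) \<tau> - (if i = j then 1 / (2 * \<tau>) else 0))^2)\<bar>
        \<le> 4 * G^2 / (real N)^2 * (400 * W^6 / real N)"
    proof -
      have f: "(2 * G / real N)^2 = 4 * G^2 / (real N)^2" by (simp add: power_divide power_mult_distrib)
      have "\<bar>Bnorm2 n N f z - 4 * G^2 / (real N)^2 *
          (\<Sum>i<n. \<Sum>j<n. (pdx i (pdx j f) (xpart n z) \<tau> - (if i = j then 1 / (2 * \<tau>) else 0))^2)\<bar>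
         = 4 * G^2 / (real N)^2 * \<bar>(\<Sum>k<n+N. \<Sum>l<n+N. (Q k l - (if k = l then T / real (n + N) else 0))^2)
              - (\<Sum>i<n. \<Sum>j<n. ((\<lambda>k l. phi n N f [DX k, DX l] z) i j - (if i = j then 1 / (2 * \<tau>) else 0))^2)\<bar>"
      proof -
        have gen: "\<And>c X Y::real. c \<ge> 0 \<Longrightarrow> \<bar>c * X - c * Y\<bar> = c * \<bar>X - Y\<bar>"
          by (simp add: right_diff_distrib[symmetric] abs_mult)
        show ?thesis unfolding Bn SLeq f by (rule gen) simp
      qed
      also have "\<dots> \<le> 4 * G^2 / (real N)^2 * (400 * W^6 / real N)"
        using QN unfolding T_def by (intro mult_left_mono) auto
      finally show ?thesis .
    qed
    show "let \<tau> = (rad n N z)^2 / (2 * real N); x = xpart n z; b = bfun n N f z in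
             (\<forall>k<n+N. \<forall>l<n+N.
                \<bar>real N / (2 * b^2) * hessz (\<lambda>w. (bfun n N f w)^2) z k l - M0 n f x \<tau> k l\<bar>
                  \<le> (if (k < n) = (l < n) then 400 * W^6 / real N else 400 * W^6 / sqrt (real N)))
             \<and> \<bar>Bnorm2 n N f z
                 - 4 * b^4 / (real N)^2 *
                     (\<Sum>i<n. \<Sum>j<n. (pdx i (pdx j f) x \<tau> - (if i = j then 1 / (2 * \<tau>) else 0))^2)\<bar>
                 \<le> 4 * b^4 / (real N)^2 * (400 * W^6 / real N)"
      unfolding Let_def tau_eq bsqG b4 using entries normb by blast
  qed
qed

end
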